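(* Let $H_0,H_1$ be complex Hilbert spaces, $G$ a densely defined closed operator from $H_0$ into $H_1$ and $D$ a densely defined closed operator from $H_1$ into $H_0$ with $-G^*\subset D$, and assume the inclusion $\mathrm{dom}(G)\hookrightarrow H_0$ is compact. Let $m_n,m\in\mathcal L(H_0)$, $a_n,a\in\mathcal L(H_1)$ ($n\in\mathbb N$) and $\mu>0$ with $\mathrm{Re}\,m_n,\mathrm{Re}\,m\ge\mu I$, $\mathrm{Re}\,a_n,\mathrm{Re}\,a\ge\mu I$ for all $n$ and $\sup_n\|a_n\|<\infty$. Let $\Lambda,\Lambda_n\colon\mathrm{BD}(G)\to\mathrm{BD}(D)$ be the Dirichlet-to-Neumann operators associated with $-DaG+m$ and $-Da_nG+m_n$. Suppose $m_n\to m$ in the weak operator topology on $\mathcal L(H_0)$ and $(\iota^*a_n\iota)^{-1}\to(\iota^*a\iota)^{-1}$ in the weak operator topology on $\mathcal L(\mathrm{ran}(G))$. Let $q,q_1,q_2,\ldots\in\mathrm{BD}(D)$ with $q_n\to q$ in $\mathrm{BD}(D)$. Then $\Lambda_n^{-1}q_n\to\Lambda^{-1}q$ weakly in $\mathrm{BD}(G)$.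
   Context: $\mathring D=-G^*$, $\mathring G=-D^*$. Domains carry graph inner products. $\mathrm{BD}(G)$ (resp. $\mathrm{BD}(D)$) is the orthogonal complement of $\mathrm{dom}(\mathring G)$ in $\mathrm{dom}(G)$ (resp. of $\mathrm{dom}(\mathring D)$ in $\mathrm{dom}(D)$) with induced inner products; $\pi_{\mathrm{BD}(D)}$ is the orthogonal projection onto $\mathrm{BD}(D)$. For $a,m$ with real parts bounded below by $\mu I$ and $u_0\in\mathrm{BD}(G)$ there is a unique $u\in\mathrm{dom}(G)$ with $aGu\in\mathrm{dom}(D)$, $mu-DaGu=0$, $u-u_0\in\mathrm{dom}(\mathring G)$; $\Lambda u_0=\pi_{\mathrm{BD}(D)}(aGu)$, and $\Lambda$ is a bounded invertible operator $\mathrm{BD}(G)\to\mathrm{BD}(D)$. Under the compactness assumption $\mathrm{ran}(G)$ is closed in $H_1$; it carries the $H_1$-norm, $\iota\colon\mathrm{ran}(G)\hookrightarrow H_1$ is the inclusion and $\iota^*$ the orthogonal projection onto $\mathrm{ran}(G)$; $\iota^*a\iota$ is invertible on $\mathrm{ran}(G)$. *)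

theory Defs
  imports "HOL-Analysis.Analysis"
begin

text \<open>A complex Hilbert space is encoded as a real Hilbert space (type of class
  real_inner + complete_space) together with an orthogonal complex structure J
  (multiplication by the imaginary unit).\<close>

definition complex_structure :: "('a::real_inner \<Rightarrow> 'a) \<Rightarrow> bool" where
  "complex_structure J \<longleftrightarrow> linear J \<and> (\<forall>x. J (J x) = - x) \<and> (\<forall>x y. inner (J x) (J y) = inner x y)"

text \<open>Complex scalar multiplication and the complex inner product
  (linear in the first, conjugate-linear in the second argument).\<close>

definition scaleC :: "('a::real_inner \<Rightarrow> 'a) \<Rightarrow> complex \<Rightarrow> 'a \<Rightarrow> 'a" where
  "scaleC J c x = Re c *\<^sub>R x + Im c *\<^sub>R J x"

definition cinner :: "('a::real_inner \<Rightarrow> 'a) \<Rightarrow> 'a \<Rightarrow> 'a \<Rightarrow> complex" where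
  "cinner J x y = Complex (inner x y) (inner x (J y))"

definition clinear_op ::
  "('a::real_inner \<Rightarrow> 'a) \<Rightarrow> ('b::real_inner \<Rightarrow> 'b) \<Rightarrow> 'a set \<Rightarrow> ('a \<Rightarrow> 'b) \<Rightarrow> bool" where
  "clinear_op J K dm T \<longleftrightarrow>
     (\<forall>c x. x \<in> dm \<longrightarrow> scaleC J c x \<in> dm \<and> T (scaleC J c x) = scaleC K c (T x)) \<and>
     (\<forall>x y. x \<in> dm \<longrightarrow> y \<in> dm \<longrightarrow> x + y \<in> dm \<and> T (x + y) = T x + T y) \<and>
     0 \<in> dm"

definition densely_defined_closed ::
  "('a::{real_inner,complete_space} \<Rightarrow> 'a) \<Rightarrow> ('b::{real_inner,complete_space} \<Rightarrow> 'b) \<Rightarrow> 'a set \<Rightarrow> ('a \<Rightarrow> 'b) \<Rightarrow> bool" where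
  "densely_defined_closed J K dm T \<longleftrightarrow>
     clinear_op J K dm T \<and> closure dm = UNIV \<and> closed ((\<lambda>x. (x, T x)) ` dm)"

definition bounded_clinear_op :: "('a::real_inner \<Rightarrow> 'a) \<Rightarrow> ('a \<Rightarrow> 'a) \<Rightarrow> bool" where
  "bounded_clinear_op J T \<longleftrightarrow> bounded_linear T \<and> (\<forall>x. T (J x) = J (T x))"

definition re_ge :: "('a::real_inner \<Rightarrow> 'a) \<Rightarrow> ('a \<Rightarrow> 'a) \<Rightarrow> real \<Rightarrow> bool" where
  "re_ge J T \<mu> \<longleftrightarrow> (\<forall>x. Re (cinner J (T x) x) \<ge> \<mu> * (norm x)\<^sup>2)"

definition adj_dom :: "('a \<Rightarrow> 'a \<Rightarrow> complex) \<Rightarrow> ('b \<Rightarrow> 'b \<Rightarrow> complex) \<Rightarrow> 'a set \<Rightarrow> ('a \<Rightarrow> 'b) \<Rightarrow> 'b set" where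
  "adj_dom ipA ipB dm T = {y. \<exists>z. \<forall>x\<in>dm. ipB (T x) y = ipA x z}"

definition adj :: "('a \<Rightarrow> 'a \<Rightarrow> complex) \<Rightarrow> ('b \<Rightarrow> 'b \<Rightarrow> complex) \<Rightarrow> 'a set \<Rightarrow> ('a \<Rightarrow> 'b) \<Rightarrow> 'b \<Rightarrow> 'a" where
  "adj ipA ipB dm T y = (THE z. \<forall>x\<in>dm. ipB (T x) y = ipA x z)"

definition graph_inner ::
  "('a::real_inner \<Rightarrow> 'a) \<Rightarrow> ('b::real_inner \<Rightarrow> 'b) \<Rightarrow> ('a \<Rightarrow> 'b) \<Rightarrow> 'a \<Rightarrow> 'a \<Rightarrow> complex" where
  "graph_inner J K T x y = cinner J x y + cinner K (T x) (T y)"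

definition orth_compl_in :: "('v \<Rightarrow> 'v \<Rightarrow> complex) \<Rightarrow> 'v set \<Rightarrow> 'v set \<Rightarrow> 'v set" where
  "orth_compl_in ip V S = {x \<in> V. \<forall>s\<in>S. ip x s = 0}"

definition orth_proj :: "('v::ab_group_add \<Rightarrow> 'v \<Rightarrow> complex) \<Rightarrow> 'v set \<Rightarrow> 'v \<Rightarrow> 'v" where
  "orth_proj ip S x = (THE p. p \<in> S \<and> (\<forall>s\<in>S. ip (x - p) s = 0))"

text \<open>dm(Gcirc) where Gcirc = -D^*.\<close>
definition dom_Gcirc where
  "dom_Gcirc J0 J1 dD D = adj_dom (cinner J1) (cinner J0) dD D"

text \<open>dm(Dcirc) where Dcirc = -G^*.\<close>
definition dom_Dcirc where
  "dom_Dcirc J0 J1 dG G = adj_dom (cinner J0) (cinner J1) dG G"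

definition BD_G where
  "BD_G J0 J1 dG G dD D = orth_compl_in (graph_inner J0 J1 G) dG (dom_Gcirc J0 J1 dD D)"

definition BD_D where
  "BD_D J0 J1 dG G dD D = orth_compl_in (graph_inner J1 J0 D) dD (dom_Dcirc J0 J1 dG G)"

definition DtN where
  "DtN J0 J1 dG G dD D a m u0 =
     (let u = (THE u. u \<in> dG \<and> a (G u) \<in> dD \<and> m u - D (a (G u)) = 0
                     \<and> u - u0 \<in> dom_Gcirc J0 J1 dD D)
      in orth_proj (graph_inner J1 J0 D) (BD_D J0 J1 dG G dD D) (a (G u)))"

definition DtN_inv where
  "DtN_inv J0 J1 dG G dD D a m q = inv_into (BD_G J0 J1 dG G dD D) (DtN J0 J1 dG G dD D a m) q"

definition compress where
  "compress J1 R a x = orth_proj (cinner J1) R (a x)"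

definition compress_inv where
  "compress_inv J1 R a y = inv_into R (compress J1 R a) y"

end

theory Submission
  imports Defs
begin


lemma parallelogram:
  fixes a b :: "'h::real_inner"
  shows "norm (a - b)^2 + norm (a + b)^2 = 2*norm a^2 + 2*norm b^2"
  by (simp add: power2_norm_eq_inner inner_diff inner_add inner_commute algebra_simps)

lemma infdist_lessE:
  assumes "A \<noteq> {}" "infdist x A < e"
  obtains a where "a \<in> A" "dist x a < e"
proof -
  have "(INF a\<in>A. dist x a) < e" using assms by (simp add: infdist_def)
  then obtain a where "a \<in> A" "dist x a < e"
    using cInf_lessD[of "(\<lambda>a. dist x a) ` A" e] assms(1) by auto
  then show ?thesis using that by blast
qed

lemma proj_exists:
  fixes V :: "'h::{real_inner,complete_space} set"
  assumes sub: "subspace V" and cl: "closed V"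
  shows "\<exists>p\<in>V. \<forall>v\<in>V. inner (x - p) v = 0"
proof -
  define d where "d = infdist x V"
  have V0: "0 \<in> V" using sub by (simp add: subspace_0)
  hence Vne: "V \<noteq> {}" by auto
  have d0: "d \<ge> 0" unfolding d_def by (rule infdist_nonneg)
  have dle: "d \<le> norm (x - v)" if "v \<in> V" for v
    using infdist_le[OF that, of x] by (simp add: d_def dist_norm)
  have "\<forall>n. \<exists>p. p \<in> V \<and> norm (x - p) < d + 1/(real n + 1)"
  proof
    fix n
    have "infdist x V < d + 1/(real n+1)" by (simp add: d_def)
    then obtain a where "a \<in> V" "dist x a < d + 1/(real n+1)" by (rule infdist_lessE[OF Vne])
    then show "\<exists>p. p \<in> V \<and> norm (x - p) < d + 1/(real n + 1)" by (auto simp: dist_norm)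
  qed
  then obtain p where pV: "\<And>n. p n \<in> V" and pd: "\<And>n. norm (x - p n) < d + 1/(real n + 1)"
    by metis
  have key: "norm (p m - p n)^2 \<le> 2*(2*d*(1/(real m+1)) + (1/(real m+1))^2) + 2*(2*d*(1/(real n+1)) + (1/(real n+1))^2)" for m n
  proof -
    define M where "M = norm (x - (1/2) *\<^sub>R (p m + p n))"
    have mid: "(1/2) *\<^sub>R (p m + p n) \<in> V" using pV sub by (simp add: subspace_add subspace_scale)
    have "d \<le> M" unfolding M_def by (rule dle[OF mid])
    hence A1: "d^2 \<le> M^2" using d0 by (simp add: power_mono)
    have "(x - p n) + (x - p m) = 2 *\<^sub>R (x - (1/2) *\<^sub>R (p m + p n))"
      by (simp add: algebra_simps scaleR_2)
    hence A2: "norm ((x - p n) + (x - p m))^2 = 4 * M^2"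
      by (simp add: power_mult_distrib M_def)
    have A3: "norm ((x - p n) - (x - p m))^2 + norm ((x - p n) + (x - p m))^2
        = 2*norm (x - p n)^2 + 2*norm (x - p m)^2" by (rule parallelogram)
    have A4: "(x - p n) - (x - p m) = p m - p n" by simp
    have A5: "norm (x - p n)^2 \<le> (d + 1/(real n + 1))^2"
      using pd[of n] by (intro power_mono) auto
    have A6: "norm (x - p m)^2 \<le> (d + 1/(real m + 1))^2"
      using pd[of m] by (intro power_mono) auto
    have E1: "(d + 1/(real n + 1))^2 = d^2 + (2*d*(1/(real n+1)) + (1/(real n+1))^2)" by (simp add: power2_sum)
    have E2: "(d + 1/(real m + 1))^2 = d^2 + (2*d*(1/(real m+1)) + (1/(real m+1))^2)" by (simp add: power2_sum)
    have lin: "P \<le> 2*b + 2*a" if "D2 \<le> M2" "P + 4*M2 = 2*A + 2*B" "A \<le> D2 + a" "B \<le> D2 + b"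
      for D2 M2 P A B a b :: real using that by linarith
    show ?thesis apply (rule lin[OF A1]) using A2 A3 A4 apply simp using A5 E1 apply simp using A6 E2 by simp
  qed
  have "Cauchy p"
  proof (rule metric_CauchyI)
    fix e :: real assume e: "e > 0"
    define c where "c = min 1 (e^2 / (8*(2*d+1)))"
    have c0: "c > 0" using e d0 by (simp add: c_def)
    obtain N where N0: "inverse (real (Suc N)) < c" using reals_Archimedean c0 by blast
    have N: "1/(real N + 1) < c" using N0 by (simp add: inverse_eq_divide add.commute)
    have small: "2*d*(1/(real k+1)) + (1/(real k+1))^2 \<le> e^2/8" if "k \<ge> N" for k
    proof -
      define t where "t = 1/(real k+1)"
      have "t \<le> 1/(real N+1)" using that by (simp add: t_def frac_le)
      hence tc: "t \<le> c" using N by simp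
      have t0: "t \<ge> 0" by (simp add: t_def)
      have "t \<le> 1" using tc by (simp add: c_def)
      hence "t^2 \<le> t" using t0 by (simp add: power2_eq_square mult_le_cancel_left1 mult_left_le)
      hence "2*d*t + t^2 \<le> t*(2*d+1)" by (simp add: algebra_simps)
      also have "\<dots> \<le> c*(2*d+1)" using tc d0 by (simp add: mult_right_mono)
      also have "\<dots> \<le> e^2/(8*(2*d+1)) * (2*d+1)" using d0 by (intro mult_right_mono) (auto simp: c_def)
      also have "\<dots> = e^2/8" using d0 by (simp add: field_simps)
      finally show ?thesis by (simp add: t_def)
    qed
    show "\<exists>M. \<forall>m\<ge>M. \<forall>n\<ge>M. dist (p m) (p n) < e"
    proof (intro exI allI impI)
      fix m n assume "N \<le> m" "N \<le> n"
      have "norm (p m - p n)^2 \<le> e^2/2" using key[of m n] small[OF \<open>N \<le> m\<close>] small[OF \<open>N \<le> n\<close>] by simp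
      also have "\<dots> < e^2" using e by simp
      finally have "norm (p m - p n)^2 < e^2" .
      hence "norm (p m - p n) < e" using e by (simp add: power_less_imp_less_base)
      then show "dist (p m) (p n) < e" by (simp add: dist_norm)
    qed
  qed
  then obtain q where q: "p \<longlonglongrightarrow> q" using Cauchy_convergent_iff convergent_def by blast
  have qV: "q \<in> V" using cl pV q closed_sequentially by blast
  have "(\<lambda>n. norm (x - p n)) \<longlonglongrightarrow> norm (x - q)" using q by (intro tendsto_intros)
  moreover have "(\<lambda>n. d + 1/(real n + 1)) \<longlonglongrightarrow> d + 0"
    using LIMSEQ_inverse_real_of_nat by (intro tendsto_intros) (simp add: inverse_eq_divide add.commute)
  ultimately have "norm (x - q) \<le> d"
    using pd by (intro LIMSEQ_le[of "\<lambda>n. norm (x - p n)" _ "\<lambda>n. d + 1/(real n + 1)"]) (auto intro: less_imp_le)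
  hence qmin: "norm (x - q) \<le> norm (x - v)" if "v \<in> V" for v using dle[OF that] by simp
  have "inner (x - q) v = 0" if vV: "v \<in> V" for v
  proof -
    define sv where "sv = inner (x - q) v"
    define c where "c = 1/((norm v)^2 + 1)"
    have c0: "c > 0" by (simp add: c_def add_nonneg_pos)
    define t where "t = c * sv"
    have "q + t *\<^sub>R v \<in> V" using qV vV sub by (simp add: subspace_add subspace_scale)
    hence "norm (x - q) \<le> norm (x - (q + t *\<^sub>R v))" by (rule qmin)
    moreover have "x - (q + t *\<^sub>R v) = (x - q) - t *\<^sub>R v" by simp
    ultimately have "norm (x - q) \<le> norm ((x - q) - t *\<^sub>R v)" by simp
    hence B: "norm (x - q)^2 \<le> norm ((x - q) - t *\<^sub>R v)^2" by (simp add: power_mono)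
    have e0: "norm (w - t *\<^sub>R v)^2 = inner w w - 2*t*(inner w v) + t^2 * inner v v" for w :: 'h
      by (simp only: power2_norm_eq_inner) (simp add: inner_diff_left inner_diff_right inner_commute power2_eq_square algebra_simps)
    note e = e0[of "x - q"]
    have e2: "norm (x-q)^2 = inner (x-q) (x-q)" by (simp add: power2_norm_eq_inner)
    have "2*t * sv \<le> t^2 * inner v v" using B e e2 unfolding sv_def by linarith
    hence A: "2*c* sv^2 \<le> c^2* sv^2*(norm v)^2"
      by (simp add: t_def power2_norm_eq_inner[symmetric] power2_eq_square algebra_simps)
    have "c * (norm v)^2 \<le> 1" unfolding c_def by (simp add: divide_le_eq_1 add_nonneg_pos)
    hence cv: "c * (norm v)^2 \<le> 1" .
    have "c^2* sv^2*(norm v)^2 = (c * (norm v)^2) * (c* sv^2)" by (simp add: power2_eq_square algebra_simps)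
    also have "\<dots> \<le> 1 * (c* sv^2)" using cv c0 by (intro mult_right_mono) auto
    finally have "c^2* sv^2*(norm v)^2 \<le> c* sv^2" by simp
    with A c0 have "2*c* sv^2 \<le> c* sv^2" by linarith
    hence "sv^2 \<le> 0" using c0 by (simp add: mult_le_cancel_left)
    thus ?thesis by (simp add: sv_def)
  qed
  with qV show ?thesis by blast
qed


definition proj :: "'h::real_inner set \<Rightarrow> 'h \<Rightarrow> 'h" where
  "proj V x = (SOME p. p \<in> V \<and> (\<forall>v\<in>V. inner (x - p) v = 0))"

locale csub =
  fixes V :: "'h::{real_inner,complete_space} set"
  assumes sub: "subspace V" and cl: "closed V"
begin

lemma proj: "proj V x \<in> V \<and> (\<forall>v\<in>V. inner (x - proj V x) v = 0)"
proof -
  have "\<exists>p. p \<in> V \<and> (\<forall>v\<in>V. inner (x - p) v = 0)" using proj_exists[OF sub cl, of x] by blast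
  from someI_ex[OF this] show ?thesis unfolding proj_def .
qed

lemma proj_in: "proj V x \<in> V" using proj by blast
lemma proj_orth: "v \<in> V \<Longrightarrow> inner (x - proj V x) v = 0" using proj by blast

lemma orth_self_zero: "w \<in> V \<Longrightarrow> (\<forall>v\<in>V. inner w v = 0) \<Longrightarrow> w = 0"
  by auto

lemma proj_unique: assumes "p \<in> V" "\<forall>v\<in>V. inner (x - p) v = 0" shows "proj V x = p"
proof -
  have d: "proj V x - p \<in> V" using assms proj_in sub by (simp add: subspace_diff)
  have "inner (proj V x - p) (proj V x - p) = inner (x - p) (proj V x - p) - inner (x - proj V x) (proj V x - p)"
    by (simp add: inner_diff_left)
  also have "\<dots> = 0" using assms(2) d proj_orth[OF d] by simp
  finally show ?thesis by simp
qed

lemma proj_id: "v \<in> V \<Longrightarrow> proj V v = v"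
  by (rule proj_unique) auto

lemma proj_add: "proj V (x + y) = proj V x + proj V y"
proof (rule proj_unique)
  show "proj V x + proj V y \<in> V" using proj_in sub by (simp add: subspace_add)
  have e: "x + y - (proj V x + proj V y) = (x - proj V x) + (y - proj V y)" by simp
  show "\<forall>v\<in>V. inner (x + y - (proj V x + proj V y)) v = 0"
    unfolding e inner_add_left using proj_orth by simp
qed

lemma proj_scale: "proj V (r *\<^sub>R x) = r *\<^sub>R proj V x"
proof (rule proj_unique)
  show "r *\<^sub>R proj V x \<in> V" using proj_in sub by (simp add: subspace_scale)
  show "\<forall>v\<in>V. inner (r *\<^sub>R x - r *\<^sub>R proj V x) v = 0"
    using proj_orth[of _ x] by (simp add: scaleR_diff_right[symmetric])
qed

lemma proj_linear: "linear (proj V)"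
  by (rule linearI) (simp_all add: proj_add proj_scale)

lemma proj_norm: "norm (proj V x) \<le> norm x"
proof -
  have "inner x x = inner (proj V x) (proj V x) + inner (x - proj V x) (x - proj V x)"
    using proj_orth[OF proj_in, of x] by (simp add: inner_diff_left inner_diff_right inner_commute)
  hence "norm (proj V x)^2 \<le> norm x^2"
    by (simp add: power2_norm_eq_inner)
  thus ?thesis using power2_le_imp_le norm_ge_zero by blast
qed

lemma proj_bl: "bounded_linear (proj V)"
  by (rule bounded_linear_intro[where K=1]) (simp_all add: proj_add proj_scale proj_norm)

lemma proj_inner: "v \<in> V \<Longrightarrow> inner (proj V x) v = inner x v"
  using proj_orth[of v x] by (simp add: inner_diff_left)

lemma proj_orth_zero: "x \<in> V \<Longrightarrow> (\<forall>v\<in>V. inner x v = 0) \<Longrightarrow> x = 0"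
  by auto

end

lemma subspace_lin_image: assumes "linear f" "subspace S" shows "subspace (f ` S)"
  using assms unfolding subspace_def
  by (auto simp: linear_0 image_iff intro: bexI[where x=0] dest: linear_add linear_scale)
    (metis linear_add, metis linear_scale)

lemma csubI: "subspace V \<Longrightarrow> closed V \<Longrightarrow> csub V" by (simp add: csub_def)

lemma lax_milgram:
  fixes V :: "'h::{real_inner,complete_space} set" and M :: "'h \<Rightarrow> 'h"
  assumes sub: "subspace V" and cl: "closed V" and M: "bounded_linear M" and c: "c > 0"
    and coerc: "\<forall>v\<in>V. inner (M v) v \<ge> c * (norm v)^2"
  shows "\<exists>u\<in>V. \<forall>v\<in>V. inner (M u) v = inner h v"
proof -
  interpret V: csub V by (rule csubI[OF sub cl])
  define A where "A = (\<lambda>u. proj V (M u))"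
  have Abl: "bounded_linear A" unfolding A_def
    using bounded_linear_compose[OF V.proj_bl M] by (simp add: o_def)
  have AV: "A u \<in> V" for u unfolding A_def by (rule V.proj_in)
  have Ain: "v \<in> V \<Longrightarrow> inner (A u) v = inner (M u) v" for u v unfolding A_def by (rule V.proj_inner)
  have lower: "c * norm w \<le> norm (A w)" if "w \<in> V" for w
  proof -
    have "c * (norm w)^2 \<le> inner (A w) w" using coerc that Ain[OF that, of w] by simp
    also have "\<dots> \<le> norm (A w) * norm w" by (rule norm_cauchy_schwarz)
    finally have "c * norm w * norm w \<le> norm (A w) * norm w" by (simp add: power2_eq_square mult.assoc)
    thus ?thesis by (cases "norm w = 0") (auto simp: mult_le_cancel_right)
  qed
  define S where "S = A ` V"
  have Ssub: "subspace S" unfolding S_def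
    using subspace_lin_image[OF bounded_linear.linear[OF Abl] sub] .
  have SV: "S \<subseteq> V" using AV S_def by auto
  have Scl: "closed S"
  proof (unfold closed_sequential_limits, intro allI impI, elim conjE)
    fix f l assume fS: "\<forall>n. f n \<in> S" and fl: "f \<longlonglongrightarrow> l"
    have "\<forall>n. \<exists>u. u \<in> V \<and> f n = A u" using fS unfolding S_def by blast
    then obtain u where uV: "\<And>n. u n \<in> V" and fu: "\<And>n. f n = A (u n)" by metis
    have "Cauchy f" using fl by (rule LIMSEQ_imp_Cauchy)
    have "Cauchy u"
    proof (rule metric_CauchyI)
      fix e :: real assume e: "e > 0"
      obtain N where N: "\<forall>m\<ge>N. \<forall>n\<ge>N. dist (f m) (f n) < c * e"
        using metric_CauchyD[OF \<open>Cauchy f\<close>, of "c*e"] c e by auto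
      show "\<exists>N. \<forall>m\<ge>N. \<forall>n\<ge>N. dist (u m) (u n) < e"
      proof (intro exI allI impI)
        fix m n assume mn: "N \<le> m" "N \<le> n"
        have w: "u m - u n \<in> V" using uV sub by (simp add: subspace_diff)
        have "c * norm (u m - u n) \<le> norm (A (u m - u n))" by (rule lower[OF w])
        also have "\<dots> = dist (f m) (f n)" using fu by (simp add: dist_norm linear_diff[OF bounded_linear.linear[OF Abl]])
        also have "\<dots> < c * e" using N mn by auto
        finally show "dist (u m) (u n) < e" using c by (simp add: dist_norm)
      qed
    qed
    then obtain u0 where u0: "u \<longlonglongrightarrow> u0" using Cauchy_convergent_iff convergent_def by blast
    have u0V: "u0 \<in> V" using cl uV u0 closed_sequentially by blast
    have "(\<lambda>n. A (u n)) \<longlonglongrightarrow> A u0" using u0 Abl by (rule bounded_linear.tendsto[rotated])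
    moreover have "f = (\<lambda>n. A (u n))" using fu by auto
    ultimately have "f \<longlonglongrightarrow> A u0" by simp
    hence "l = A u0" using fl LIMSEQ_unique by blast
    then show "l \<in> S" using u0V S_def by auto
  qed
  interpret S: csub S by (rule csubI[OF Ssub Scl])
  define h' where "h' = proj V h"
  define w where "w = h' - proj S h'"
  have wV: "w \<in> V" unfolding w_def h'_def using V.proj_in S.proj_in SV sub by (meson subsetD subspace_diff)
  have "inner w (A w) = 0" unfolding w_def using S.proj_orth[of "A w" h'] S_def wV w_def by auto
  hence "inner (M w) w = 0" using Ain[OF wV, of w] by (simp add: inner_commute)
  hence "c * (norm w)^2 \<le> 0" using coerc wV by force
  hence "w = 0" using c by (simp add: mult_le_0_iff)
  hence "h' = proj S h'" unfolding w_def by simp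
  hence "h' \<in> S" using S.proj_in by metis
  then obtain u where uV: "u \<in> V" and hu: "h' = A u" unfolding S_def by auto
  show ?thesis
  proof (intro bexI[OF _ uV] ballI)
    fix v assume vV: "v \<in> V"
    have "inner (M u) v = inner (A u) v" using Ain[OF vV] by simp
    also have "\<dots> = inner h' v" using hu by simp
    also have "\<dots> = inner h v" unfolding h'_def by (rule V.proj_inner[OF vV])
    finally show "inner (M u) v = inner h v" .
  qed
qed


lemma subseq_principle:
  fixes X :: "nat \<Rightarrow> 'm::metric_space"
  assumes H: "\<And>r::nat\<Rightarrow>nat. strict_mono r \<Longrightarrow> \<exists>s::nat\<Rightarrow>nat. strict_mono s \<and> (X \<circ> r \<circ> s) \<longlonglongrightarrow> L"
  shows "X \<longlonglongrightarrow> L"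
proof (rule ccontr)
  assume "\<not> X \<longlonglongrightarrow> L"
  then obtain e where e: "e > 0" and inf: "\<forall>N. \<exists>n\<ge>N. \<not> dist (X n) L < e"
    unfolding lim_sequentially by blast
  have "infinite {n. e \<le> dist (X n) L}"
    unfolding infinite_nat_iff_unbounded_le using inf by (auto simp: not_less)
  then obtain r :: "nat \<Rightarrow> nat" where r: "strict_mono r" and rP: "\<And>n. e \<le> dist (X (r n)) L"
    using infinite_enumerate by blast
  obtain s where s: "strict_mono s" and lim: "(X \<circ> r \<circ> s) \<longlonglongrightarrow> L" using H[OF r] by blast
  then obtain N where "\<forall>n\<ge>N. dist ((X \<circ> r \<circ> s) n) L < e" using e unfolding lim_sequentially by blast
  hence "dist (X (r (s N))) L < e" by simp
  with rP[of "s N"] show False by simp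
qed

lemma sokal_step:
  fixes T :: "'x::real_normed_vector \<Rightarrow> 'y::real_normed_vector"
  assumes T: "bounded_linear T" and r: "r > 0"
  shows "\<exists>y. dist y x \<le> r \<and> (2/3) * r * onorm T \<le> norm (T y)"
proof (cases "onorm T = 0")
  case True then show ?thesis by (intro exI[of _ x]) (simp add: r less_imp_le)
next
  case False
  hence O: "onorm T > 0" using onorm_pos_le[OF T] by simp
  have "\<exists>\<xi>. norm (T \<xi>) > (3/4) * onorm T * norm \<xi>"
  proof (rule ccontr)
    assume "\<not> ?thesis"
    hence "\<forall>\<xi>. norm (T \<xi>) \<le> (3/4) * onorm T * norm \<xi>" by (simp add: not_less)
    hence "onorm T \<le> (3/4) * onorm T" using O by (intro onorm_bound) auto
    with O show False by simp
  qed
  then obtain \<xi> where xi: "norm (T \<xi>) > (3/4) * onorm T * norm \<xi>" by blast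
  hence xi0: "\<xi> \<noteq> 0" using T by (auto simp: linear_simps)
  define \<eta> where "\<eta> = (r / norm \<xi>) *\<^sub>R \<xi>"
  have neta: "norm \<eta> = r" using xi0 r by (simp add: \<eta>_def)
  have Teta: "T \<eta> = (r / norm \<xi>) *\<^sub>R T \<xi>" unfolding \<eta>_def by (simp add: linear_simps T)
  have "norm (T \<eta>) = (r / norm \<xi>) * norm (T \<xi>)" using r by (simp add: Teta)
  also have "\<dots> > (r / norm \<xi>) * ((3/4) * onorm T * norm \<xi>)" using xi r xi0 by (intro mult_strict_left_mono) auto
  also have "(r / norm \<xi>) * ((3/4) * onorm T * norm \<xi>) = (3/4) * r * onorm T" using xi0 by simp
  finally have big: "norm (T \<eta>) > (3/4) * r * onorm T" .
  have "2 *\<^sub>R T \<eta> = T (x + \<eta>) - T (x - \<eta>)" by (simp add: linear_simps T scaleR_2)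
  hence "2 * norm (T \<eta>) \<le> norm (T (x + \<eta>)) + norm (T (x - \<eta>))"
    by (metis norm_scaleR norm_triangle_ineq4 abs_numeral)
  hence "norm (T (x + \<eta>)) \<ge> norm (T \<eta>) \<or> norm (T (x - \<eta>)) \<ge> norm (T \<eta>)" by linarith
  moreover have "(2/3) * r * onorm T \<le> norm (T \<eta>)"
  proof -
    have "(2/3) * (r * onorm T) \<le> (3/4) * (r * onorm T)" using O r by (intro mult_right_mono) auto
    thus ?thesis using big by linarith
  qed
  ultimately show ?thesis
    by (metis (no_types, lifting) add_diff_cancel_left' dist_norm diff_diff_eq2 diff_add_cancel
         neta norm_minus_commute order_trans order_refl add_diff_cancel_right')
qed

lemma ubp:
  fixes T :: "nat \<Rightarrow> 'x::{real_normed_vector,complete_space} \<Rightarrow> 'y::real_normed_vector"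
  assumes bl: "\<And>n. bounded_linear (T n)" and pb: "\<And>x. \<exists>B. \<forall>n. norm (T n x) \<le> B"
  shows "\<exists>B. \<forall>n. onorm (T n) \<le> B"
proof (rule ccontr)
  assume "\<not> ?thesis"
  hence "\<forall>k::nat. \<exists>n. onorm (T n) > 4^k" by (metis not_le)
  then obtain nn where nn: "\<And>k. onorm (T (nn k)) > 4^k" by metis
  define pick where "pick = (\<lambda>x k (r::real). SOME y. dist y x \<le> r \<and> (2/3) * r * onorm (T (nn k)) \<le> norm (T (nn k) y))"
  have pick: "dist (pick x k r) x \<le> r \<and> (2/3) * r * onorm (T (nn k)) \<le> norm (T (nn k) (pick x k r))" if "r > 0" for x k r
    unfolding pick_def by (rule someI_ex[OF sokal_step[OF bl that]])
  define xs where "xs = rec_nat 0 (\<lambda>k x. pick x k ((1/3)^(Suc k)))"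
  have xs0: "xs 0 = 0" and xsS: "xs (Suc k) = pick (xs k) k ((1/3)^(Suc k))" for k by (simp_all add: xs_def)
  have step: "dist (xs (Suc k)) (xs k) \<le> (1/3)^(Suc k)" for k using pick[of "(1/3)^(Suc k)"] xsS by simp
  have big: "(2/3) * (1/3)^(Suc k) * onorm (T (nn k)) \<le> norm (T (nn k) (xs (Suc k)))" for k
    using pick[of "(1/3)^(Suc k)"] xsS by simp
  have tail: "dist (xs k) (xs (k + j)) \<le> (1/2) * (1/3)^k * (1 - (1/3)^j)" for k j
  proof (induction j)
    case 0 then show ?case by simp
  next
    case (Suc j)
    have "dist (xs k) (xs (k + Suc j)) \<le> dist (xs k) (xs (k + j)) + dist (xs (k+j)) (xs (Suc (k+j)))"
      by (simp add: dist_triangle)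
    also have "\<dots> \<le> (1/2) * (1/3)^k * (1 - (1/3)^j) + (1/3)^(Suc (k+j))"
      using Suc.IH step[of "k+j"] by (simp add: dist_commute)
    also have "\<dots> = (1/2) * (1/3)^k * (1 - (1/3)^(Suc j))" by (simp add: power_add field_simps)
    finally show ?case .
  qed
  have tail2: "dist (xs k) (xs (k + j)) \<le> (1/2) * (1/3)^k" for k j
  proof -
    have "(1/3::real)^k * (1 - (1/3)^j) \<le> (1/3)^k" by (rule mult_left_le) auto
    with tail[of k j] show ?thesis by linarith
  qed
  have "Cauchy xs"
  proof (rule metric_CauchyI)
    fix e :: real assume e: "e > 0"
    obtain N where N: "(1/3::real)^N < e" using real_arch_pow_inv[OF e, of "1/3"] by auto
    show "\<exists>M. \<forall>m\<ge>M. \<forall>n\<ge>M. dist (xs m) (xs n) < e"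
    proof (intro exI allI impI)
      fix m n assume "N \<le> m" "N \<le> n"
      then obtain i j where "m = N + i" "n = N + j" by (metis le_add_diff_inverse)
      hence "dist (xs m) (xs n) \<le> dist (xs N) (xs m) + dist (xs N) (xs n)" by (simp add: dist_triangle3)
      also have "\<dots> \<le> (1/2) * (1/3)^N + (1/2) * (1/3)^N" using tail2[of N i] tail2[of N j] \<open>m = N+i\<close> \<open>n = N+j\<close> by simp
      finally show "dist (xs m) (xs n) < e" using N by simp
    qed
  qed
  then obtain z where z: "xs \<longlonglongrightarrow> z" using Cauchy_convergent_iff convergent_def by blast
  have zd: "dist (xs k) z \<le> (1/2) * (1/3)^k" for k
  proof (rule LIMSEQ_le_const2)
    show "(\<lambda>n. dist (xs k) (xs n)) \<longlonglongrightarrow> dist (xs k) z" using z by (intro tendsto_intros)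
    show "\<exists>N. \<forall>n\<ge>N. dist (xs k) (xs n) \<le> 1 / 2 * (1 / 3) ^ k"
      by (intro exI[of _ k] allI impI) (metis le_add_diff_inverse tail2)
  qed
  obtain B where B: "\<forall>n. norm (T n z) \<le> B" using pb by blast
  have lowb: "(4/3)^k \<le> 18 * B" for k
  proof -
    let ?O = "onorm (T (nn k))"
    have O0: "?O \<ge> 0" using onorm_pos_le[OF bl] by simp
    have "norm (T (nn k) (xs (Suc k) - z)) \<le> ?O * norm (xs (Suc k) - z)" by (rule onorm[OF bl])
    also have "\<dots> \<le> ?O * ((1/2) * (1/3)^(Suc k))" using zd[of "Suc k"] O0 by (intro mult_left_mono) (auto simp: dist_norm)
    finally have t1: "norm (T (nn k) (xs (Suc k) - z)) \<le> ?O * ((1/2) * (1/3)^(Suc k))" .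
    have "T (nn k) (xs (Suc k) - z) = T (nn k) (xs (Suc k)) - T (nn k) z" by (simp add: linear_simps bl)
    hence "norm (T (nn k) (xs (Suc k))) \<le> norm (T (nn k) z) + norm (T (nn k) (xs (Suc k) - z))"
      by (metis norm_triangle_sub add.commute)
    hence "(2/3) * (1/3)^(Suc k) * ?O \<le> B + ?O * ((1/2) * (1/3)^(Suc k))" using big[of k] t1 B by smt
    hence "(1/6) * (1/3)^(Suc k) * ?O \<le> B" by (simp add: algebra_simps)
    moreover have "(1/6) * (1/3)^(Suc k) * 4^k \<le> (1/6) * (1/3)^(Suc k) * ?O"
      by (rule mult_left_mono) (use nn[of k] in auto)
    ultimately have c: "(1/6) * (1/3)^(Suc k) * 4^k \<le> B" by linarith
    have e1: "(1/3::real)^k * 4^k = (4/3)^k" by (simp add: power_mult_distrib[symmetric])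
    have "(1/6) * (1/3::real)^(Suc k) * 4^k = (1/18) * ((1/3)^k * 4^k)" by simp
    with c e1 show ?thesis by simp
  qed
  obtain k where "18 * B < (4/3::real)^k" using real_arch_pow[of "4/3::real" "18*B"] by auto
  with lowb[of k] show False by simp
qed


section \<open>Complex structures\<close>

locale cstr =
  fixes J :: "'a::real_inner \<Rightarrow> 'a"
  assumes cs: "complex_structure J"
begin

lemma lin: "linear J" using cs by (simp add: complex_structure_def)
lemma JJ[simp]: "J (J x) = - x" using cs by (simp add: complex_structure_def)
lemma inner_JJ[simp]: "inner (J x) (J y) = inner x y" using cs by (simp add: complex_structure_def)
lemma J_add: "J (x + y) = J x + J y" using lin by (simp add: linear_add)
lemma J_diff: "J (x - y) = J x - J y" using lin by (simp add: linear_diff)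
lemma J_scale: "J (r *\<^sub>R x) = r *\<^sub>R J x" using lin by (simp add: linear_scale)
lemma J_neg: "J (- x) = - J x" using lin by (simp add: linear_neg)
lemma J_0[simp]: "J 0 = 0" using lin by (simp add: linear_0)

lemma inner_J_right: "inner x (J y) = - inner (J x) y"
proof -
  have "inner x (J y) = inner (J x) (J (J y))" by (rule inner_JJ[symmetric])
  also have "\<dots> = - inner (J x) y" by (simp add: inner_minus_right)
  finally show ?thesis .
qed

lemma inner_J_self[simp]: "inner x (J x) = 0"
  using inner_J_right[of x x] by (simp add: inner_commute)

lemma norm_J[simp]: "norm (J x) = norm x"
  by (simp add: norm_eq_sqrt_inner)

lemma bl: "bounded_linear J"
  using lin by (intro bounded_linear_intro[where K=1]) (simp_all add: J_add J_scale)

lemma cinner_Re[simp]: "Re (cinner J x y) = inner x y" by (simp add: cinner_def)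
lemma cinner_Im[simp]: "Im (cinner J x y) = inner x (J y)" by (simp add: cinner_def)

lemma cinner_eq_iff: "cinner J x y = c \<longleftrightarrow> inner x y = Re c \<and> inner x (J y) = Im c"
  by (auto simp: cinner_def complex_eq_iff)

lemma cinner_zero_iff: "cinner J x y = 0 \<longleftrightarrow> inner x y = 0 \<and> inner x (J y) = 0"
  by (simp add: cinner_eq_iff)

lemma cinner_commute: "cinner J y x = cnj (cinner J x y)"
proof -
  have a: "inner y (J x) = - inner x (J y)"
    using inner_J_right[of y x] inner_commute[of "J y" x] by simp
  have b: "inner y x = inner x y" by (rule inner_commute)
  show ?thesis by (simp only: complex_eq_iff cinner_Re cinner_Im complex_cnj a b) simp
qed

lemma cinner_diff_left: "cinner J (x - y) z = cinner J x z - cinner J y z"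
  by (simp add: complex_eq_iff inner_diff_left)
lemma cinner_add_left: "cinner J (x + y) z = cinner J x z + cinner J y z"
  by (simp add: complex_eq_iff inner_add_left)

lemma scaleC_ii: "scaleC J \<i> x = J x" by (simp add: scaleC_def)
lemma scaleC_real: "scaleC J (complex_of_real r) x = r *\<^sub>R x" by (simp add: scaleC_def)

lemma J_inj: "J x = J y \<Longrightarrow> x = y"
  by (metis JJ minus_equation_iff)

end

section \<open>Complex linear operators\<close>

locale cop = J: cstr J + K: cstr K
  for J :: "'a::real_inner \<Rightarrow> 'a" and K :: "'b::real_inner \<Rightarrow> 'b" +
  fixes dm :: "'a set" and T :: "'a \<Rightarrow> 'b"
  assumes T: "clinear_op J K dm T"
begin

lemma dm_0: "0 \<in> dm" using T by (simp add: clinear_op_def)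
lemma dm_add: "x \<in> dm \<Longrightarrow> y \<in> dm \<Longrightarrow> x + y \<in> dm" using T by (simp add: clinear_op_def)
lemma T_add: "x \<in> dm \<Longrightarrow> y \<in> dm \<Longrightarrow> T (x + y) = T x + T y" using T by (simp add: clinear_op_def)
lemma dm_J: "x \<in> dm \<Longrightarrow> J x \<in> dm" using T unfolding clinear_op_def by (metis J.scaleC_ii)
lemma T_J: "x \<in> dm \<Longrightarrow> T (J x) = K (T x)" using T unfolding clinear_op_def by (metis J.scaleC_ii K.scaleC_ii)
lemma dm_scale: "x \<in> dm \<Longrightarrow> r *\<^sub>R x \<in> dm" using T unfolding clinear_op_def by (metis J.scaleC_real)
lemma T_scale: "x \<in> dm \<Longrightarrow> T (r *\<^sub>R x) = r *\<^sub>R T x"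
  using T unfolding clinear_op_def by (metis J.scaleC_real K.scaleC_real)
lemma dm_neg: "x \<in> dm \<Longrightarrow> - x \<in> dm" using dm_scale[of x "-1"] by simp
lemma T_neg: "x \<in> dm \<Longrightarrow> T (- x) = - T x" using T_scale[of x "-1"] by simp
lemma dm_diff: "x \<in> dm \<Longrightarrow> y \<in> dm \<Longrightarrow> x - y \<in> dm" using dm_add[of x "-y"] dm_neg by simp
lemma T_diff: "x \<in> dm \<Longrightarrow> y \<in> dm \<Longrightarrow> T (x - y) = T x - T y" using T_add[of x "-y"] dm_neg T_neg by simp
lemma T_0: "T 0 = 0" using T_add[OF dm_0 dm_0] by simp

lemma dm_subspace: "subspace dm"
  unfolding subspace_def using dm_0 dm_add dm_scale by blast

definition gr :: "('a \<times> 'b) set" where "gr = (\<lambda>x. (x, T x)) ` dm"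

lemma gr_subspace: "subspace gr"
  unfolding subspace_def
proof (intro conjI ballI allI)
  have "(0, T 0) \<in> gr" unfolding gr_def using dm_0 by blast
  thus "0 \<in> gr" by (simp add: T_0 zero_prod_def)
  fix c :: real and x y assume x: "x \<in> gr" and y: "y \<in> gr"
  obtain a b where ab: "a \<in> dm" "b \<in> dm" "x = (a, T a)" "y = (b, T b)" using x y unfolding gr_def by auto
  show "x + y \<in> gr" unfolding gr_def using ab dm_add T_add by (auto intro!: image_eqI[of _ _ "a + b"])
  show "c *\<^sub>R x \<in> gr" unfolding gr_def using ab dm_scale T_scale by (auto intro!: image_eqI[of _ _ "c *\<^sub>R a"])
qed

lemma graph_inner_Re: "Re (graph_inner J K T x y) = inner x y + inner (T x) (T y)"
  by (simp add: graph_inner_def)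

lemma graph_inner_Im: "y \<in> dm \<Longrightarrow> Im (graph_inner J K T x y) = Re (graph_inner J K T x (J y))"
  by (simp add: graph_inner_def T_J)

lemma graph_inner_diff_left: "x \<in> dm \<Longrightarrow> y \<in> dm \<Longrightarrow>
  graph_inner J K T (x - y) z = graph_inner J K T x z - graph_inner J K T y z"
  by (simp add: graph_inner_def T_diff J.cinner_diff_left K.cinner_diff_left)

lemma graph_inner_commute: "graph_inner J K T y x = cnj (graph_inner J K T x y)"
  by (simp add: graph_inner_def J.cinner_commute[of y x] K.cinner_commute[of "T y" "T x"])

lemma graph_inner_self_zero: "graph_inner J K T x x = 0 \<Longrightarrow> x = 0"
proof -
  assume "graph_inner J K T x x = 0"
  hence "inner x x + inner (T x) (T x) = 0" using graph_inner_Re[of x x] by simp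
  hence "inner x x = 0" by (metis add_nonneg_eq_0_iff inner_ge_zero)
  thus "x = 0" by simp
qed

lemma graph_orth_iff:
  assumes W: "W \<subseteq> dm" "\<And>s. s \<in> W \<Longrightarrow> J s \<in> W"
  shows "(\<forall>s\<in>W. graph_inner J K T x s = 0) \<longleftrightarrow> (\<forall>s\<in>W. inner x s + inner (T x) (T s) = 0)"
proof
  assume "\<forall>s\<in>W. graph_inner J K T x s = 0"
  thus "\<forall>s\<in>W. inner x s + inner (T x) (T s) = 0" using graph_inner_Re by (metis zero_complex.simps(1))
next
  assume H: "\<forall>s\<in>W. inner x s + inner (T x) (T s) = 0"
  show "\<forall>s\<in>W. graph_inner J K T x s = 0"
  proof
    fix s assume s: "s \<in> W"
    have "Re (graph_inner J K T x s) = 0" using H s graph_inner_Re by simp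
    moreover have "Im (graph_inner J K T x s) = 0"
      using H W s graph_inner_Im[of s x] graph_inner_Re[of x "J s"] by (simp add: subsetD)
    ultimately show "graph_inner J K T x s = 0" by (simp add: complex_eq_iff)
  qed
qed

definition radj :: "'b \<Rightarrow> 'a \<Rightarrow> bool" where "radj y z \<longleftrightarrow> (\<forall>x\<in>dm. inner (T x) y = inner x z)"

lemma radj_complex:
  "(\<forall>x\<in>dm. cinner K (T x) y = cinner J x z) \<longleftrightarrow> radj y z"
proof
  assume "\<forall>x\<in>dm. cinner K (T x) y = cinner J x z"
  thus "radj y z" unfolding radj_def by (metis J.cinner_Re K.cinner_Re)
next
  assume r: "radj y z"
  show "\<forall>x\<in>dm. cinner K (T x) y = cinner J x z"
  proof
    fix x assume x: "x \<in> dm"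
    have "inner (T x) (K y) = - inner (K (T x)) y" by (rule K.inner_J_right)
    also have "\<dots> = - inner (T (J x)) y" using T_J[OF x] by simp
    also have "\<dots> = - inner (J x) z" using r dm_J[OF x] unfolding radj_def by simp
    also have "\<dots> = inner x (J z)" by (simp add: J.inner_J_right)
    finally show "cinner K (T x) y = cinner J x z" using r x unfolding radj_def
      by (simp add: complex_eq_iff)
  qed
qed

lemma adj_dom_eq: "adj_dom (cinner J) (cinner K) dm T = {y. \<exists>z. radj y z}"
  unfolding adj_dom_def using radj_complex by blast

end

locale dcop = cop J K dm T
  for J :: "'a::{real_inner,complete_space} \<Rightarrow> 'a" and K :: "'b::{real_inner,complete_space} \<Rightarrow> 'b"
  and dm T +
  assumes ddc: "densely_defined_closed J K dm T"
begin

lemma dense: "closure dm = UNIV" using ddc by (simp add: densely_defined_closed_def)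
lemma gr_closed: "closed gr" using ddc by (simp add: densely_defined_closed_def gr_def)

lemma radj_unique: "radj y z \<Longrightarrow> radj y z' \<Longrightarrow> z = z'"
proof -
  assume r: "radj y z" "radj y z'"
  have "dm \<subseteq> {x. inner x (z - z') = 0}" using r by (auto simp: radj_def inner_diff_right)
  moreover have "closed {x. inner x (z - z') = 0}"
    by (intro closed_Collect_eq continuous_intros)
  ultimately have "closure dm \<subseteq> {x. inner x (z - z') = 0}" by (rule closure_minimal)
  hence "UNIV \<subseteq> {x. inner x (z - z') = 0}" using dense by simp
  hence "inner (z - z') (z - z') = 0" by blast
  thus "z = z'" by simp
qed

lemma adj_eq: assumes "radj y z" shows "adj (cinner J) (cinner K) dm T y = z"
  unfolding adj_def
proof (rule the_equality)
  show "\<forall>x\<in>dm. cinner K (T x) y = cinner J x z" using assms radj_complex by blast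
  fix z' assume "\<forall>x\<in>dm. cinner K (T x) y = cinner J x z'"
  hence "radj y z'" using radj_complex by blast
  thus "z' = z" using radj_unique assms by blast
qed

text \<open>Closed operators equal their double adjoint.\<close>
lemma double_adj:
  assumes H: "\<And>y z. radj y z \<Longrightarrow> inner x z = inner f y"
  shows "x \<in> dm \<and> T x = f"
proof -
  interpret Gr: csub gr by (rule csubI[OF gr_subspace gr_closed])
  obtain p where p: "p \<in> dm" "proj gr (x, f) = (p, T p)"
    using Gr.proj_in[of "(x,f)"] unfolding gr_def by auto
  obtain r s where rs: "(x, f) - (p, T p) = (r, s)" by (metis surj_pair)
  have orth: "inner x' r + inner (T x') s = 0" if "x' \<in> dm" for x'
  proof -
    have "(x', T x') \<in> gr" using that by (simp add: gr_def)
    from Gr.proj_orth[OF this, of "(x,f)"] show ?thesis using p rs by (simp add: inner_commute)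
  qed
  have "radj s (- r)" unfolding radj_def
  proof
    fix x' assume "x' \<in> dm"
    from orth[OF this] show "inner (T x') s = inner x' (- r)" by (simp add: inner_minus_right)
  qed
  from H[OF this] have "inner x (- r) = inner f s" .
  hence "inner (x, f) (r, s) = 0" by (simp add: inner_minus_right)
  moreover have "inner (p, T p) (r, s) = 0" using orth[OF p(1)] by (simp add: inner_commute)
  ultimately have "inner ((x, f) - (p, T p)) (r, s) = 0" by (simp only: inner_diff_left)
  hence "inner (r, s) (r, s) = 0" using rs by simp
  hence "inner r r = 0 \<and> inner s s = 0" by (metis add_nonneg_eq_0_iff inner_ge_zero inner_Pair)
  hence "r = 0" "s = 0" by simp_all
  thus ?thesis using rs p by simp
qed

end


lemma orth_proj_eqI:
  assumes "p \<in> S" "\<forall>s\<in>S. ip (x - p) s = 0"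
    "\<And>p'. p' \<in> S \<Longrightarrow> \<forall>s\<in>S. ip (x - p') s = 0 \<Longrightarrow> p' = p"
  shows "orth_proj ip S x = p"
  unfolding orth_proj_def
proof (rule the_equality)
  show "p \<in> S \<and> (\<forall>s\<in>S. ip (x - p) s = 0)" using assms(1,2) by blast
  show "\<And>p'. p' \<in> S \<and> (\<forall>s\<in>S. ip (x - p') s = 0) \<Longrightarrow> p' = p" using assms(3) by blast
qed

context cop
begin

lemma radj_J: "radj y z \<Longrightarrow> radj (K y) (J z)"
  unfolding radj_def
proof
  fix x assume r: "\<forall>x\<in>dm. inner (T x) y = inner x z" and x: "x \<in> dm"
  have "inner (T x) (K y) = - inner (K (T x)) y" by (rule K.inner_J_right)
  also have "\<dots> = - inner (T (J x)) y" using T_J[OF x] by simp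
  also have "\<dots> = - inner (J x) z" using r dm_J[OF x] by simp
  also have "\<dots> = inner x (J z)" by (simp add: J.inner_J_right)
  finally show "inner (T x) (K y) = inner x (J z)" .
qed

lemma radj_add: "radj y z \<Longrightarrow> radj y' z' \<Longrightarrow> radj (y + y') (z + z')"
  unfolding radj_def by (simp add: inner_add_right)
lemma radj_scale: "radj y z \<Longrightarrow> radj (r *\<^sub>R y) (r *\<^sub>R z)"
  unfolding radj_def by simp
lemma radj_0: "radj 0 0"
  unfolding radj_def by simp
lemma radj_diff: "radj y z \<Longrightarrow> radj y' z' \<Longrightarrow> radj (y - y') (z - z')"
  unfolding radj_def by (simp add: inner_diff_right)

lemma orth_proj_graph:
  assumes S: "S \<subseteq> dm" "\<And>a b. a \<in> S \<Longrightarrow> b \<in> S \<Longrightarrow> a - b \<in> S"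
    and x: "x \<in> dm" and p: "p \<in> S" and o: "\<forall>s\<in>S. graph_inner J K T (x - p) s = 0"
  shows "orth_proj (graph_inner J K T) S x = p"
proof (rule orth_proj_eqI[where ip="graph_inner J K T", OF p o])
  fix p' assume p': "p' \<in> S" and o': "\<forall>s\<in>S. graph_inner J K T (x - p') s = 0"
  have d: "p' - p \<in> S" using S p p' by blast
  have dm1: "x - p \<in> dm" "x - p' \<in> dm" using S x p p' dm_diff by auto
  have "graph_inner J K T (p' - p) (p' - p) = graph_inner J K T ((x - p) - (x - p')) (p' - p)" by simp
  also have "\<dots> = graph_inner J K T (x - p) (p' - p) - graph_inner J K T (x - p') (p' - p)"
    using dm1 by (rule graph_inner_diff_left)
  also have "\<dots> = 0" using o o' d by simp
  finally have "p' - p = 0" by (rule graph_inner_self_zero)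
  thus "p' = p" by simp
qed

end

context cstr
begin

lemma orth_proj_cinner:
  assumes S: "\<And>a b. a \<in> S \<Longrightarrow> b \<in> S \<Longrightarrow> a - b \<in> S"
    and p: "p \<in> S" and o: "\<forall>s\<in>S. cinner J (x - p) s = 0"
  shows "orth_proj (cinner J) S x = p"
proof (rule orth_proj_eqI[where ip="cinner J", OF p o])
  fix p' assume p': "p' \<in> S" and o': "\<forall>s\<in>S. cinner J (x - p') s = 0"
  have d: "p' - p \<in> S" using S p p' by blast
  have "cinner J (p' - p) (p' - p) = cinner J ((x - p) - (x - p')) (p' - p)" by simp
  also have "\<dots> = 0" using o o' d by (simp only: cinner_diff_left) simp
  finally have "inner (p' - p) (p' - p) = 0" using cinner_Re by (metis zero_complex.sel(1))
  thus "p' = p" by simp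
qed

lemma cinner_orth_iff:
  assumes "\<And>s. s \<in> S \<Longrightarrow> J s \<in> S"
  shows "(\<forall>s\<in>S. cinner J x s = 0) \<longleftrightarrow> (\<forall>s\<in>S. inner x s = 0)"
  using assms by (auto simp: cinner_zero_iff)

end

locale setting =
  G: dcop J0 J1 dG G + D: dcop J1 J0 dD D
  for J0 :: "'a::{real_inner,complete_space} \<Rightarrow> 'a" and J1 :: "'b::{real_inner,complete_space} \<Rightarrow> 'b"
  and dG G dD D +
  assumes GD: "\<forall>y \<in> dom_Dcirc J0 J1 dG G. y \<in> dD \<and> D y = - adj (cinner J0) (cinner J1) dG G y"
    and compact_emb: "\<forall>S \<subseteq> dG. bounded ((\<lambda>x. (x, G x)) ` S) \<longrightarrow> compact (closure S)"
begin

definition Gc :: "'a set" where "Gc = {\<psi>. \<exists>z. D.radj \<psi> z}"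
definition Dc :: "'b set" where "Dc = {y. \<exists>z. G.radj y z}"

lemma dom_Gcirc_eq: "dom_Gcirc J0 J1 dD D = Gc"
  unfolding dom_Gcirc_def Gc_def by (rule D.adj_dom_eq)
lemma dom_Dcirc_eq: "dom_Dcirc J0 J1 dG G = Dc"
  unfolding dom_Dcirc_def Dc_def by (rule G.adj_dom_eq)

lemma C0: "G.radj y z \<Longrightarrow> y \<in> dD \<and> D y = - z"
proof -
  assume r: "G.radj y z"
  hence "y \<in> dom_Dcirc J0 J1 dG G" using dom_Dcirc_eq Dc_def by auto
  with GD have "y \<in> dD \<and> D y = - adj (cinner J0) (cinner J1) dG G y" by blast
  thus ?thesis using G.adj_eq[OF r] by simp
qed

lemma C1: "D.radj \<psi> z \<Longrightarrow> \<psi> \<in> dG \<and> G \<psi> = - z"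
proof -
  assume r: "D.radj \<psi> z"
  show ?thesis
  proof (rule G.double_adj)
    fix y z' assume r': "G.radj y z'"
    from C0[OF r'] have y: "y \<in> dD" "D y = - z'" by auto
    from r y(1) have "inner (D y) \<psi> = inner y z" by (simp add: D.radj_def)
    hence "- inner z' \<psi> = inner y z" using y(2) by simp
    thus "inner \<psi> z' = inner (- z) y" by (simp add: inner_commute)
  qed
qed

lemma Gc_dG: "\<psi> \<in> Gc \<Longrightarrow> \<psi> \<in> dG" using C1 Gc_def by blast
lemma Dc_dD: "y \<in> Dc \<Longrightarrow> y \<in> dD" using C0 Dc_def by blast
lemma Gc_J: "\<psi> \<in> Gc \<Longrightarrow> J0 \<psi> \<in> Gc" unfolding Gc_def using D.radj_J by blast
lemma Dc_J: "y \<in> Dc \<Longrightarrow> J1 y \<in> Dc" unfolding Dc_def using G.radj_J by blast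
lemma Gc_diff: "a \<in> Gc \<Longrightarrow> b \<in> Gc \<Longrightarrow> a - b \<in> Gc" unfolding Gc_def using D.radj_diff by blast
lemma Dc_diff: "a \<in> Dc \<Longrightarrow> b \<in> Dc \<Longrightarrow> a - b \<in> Dc" unfolding Dc_def using G.radj_diff by blast
lemma Gc_add: "a \<in> Gc \<Longrightarrow> b \<in> Gc \<Longrightarrow> a + b \<in> Gc" unfolding Gc_def using D.radj_add by blast
lemma Dc_add: "a \<in> Dc \<Longrightarrow> b \<in> Dc \<Longrightarrow> a + b \<in> Dc" unfolding Dc_def using G.radj_add by blast
lemma Gc_scale: "a \<in> Gc \<Longrightarrow> r *\<^sub>R a \<in> Gc" unfolding Gc_def using D.radj_scale by blast
lemma Dc_scale: "a \<in> Dc \<Longrightarrow> r *\<^sub>R a \<in> Dc" unfolding Dc_def using G.radj_scale by blast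
lemma Gc_0: "0 \<in> Gc" unfolding Gc_def using D.radj_0 by blast
lemma Dc_0: "0 \<in> Dc" unfolding Dc_def using G.radj_0 by blast

definition grGc :: "('a \<times> 'b) set" where "grGc = (\<lambda>x. (x, G x)) ` Gc"
definition grDc :: "('b \<times> 'a) set" where "grDc = (\<lambda>x. (x, D x)) ` Dc"

lemma grGc_eq: "grGc = (\<Inter>x\<in>dD. {p. inner (D x) (fst p) + inner x (snd p) = 0})"
proof (intro set_eqI iffI)
  fix p assume "p \<in> grGc"
  then obtain \<psi> z where p: "p = (\<psi>, G \<psi>)" and r: "D.radj \<psi> z" unfolding grGc_def Gc_def by auto
  have "G \<psi> = - z" using C1[OF r] by simp
  thus "p \<in> (\<Inter>x\<in>dD. {p. inner (D x) (fst p) + inner x (snd p) = 0})"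
    using r p by (auto simp: D.radj_def)
next
  fix p assume H: "p \<in> (\<Inter>x\<in>dD. {p. inner (D x) (fst p) + inner x (snd p) = 0})"
  obtain \<psi> w where p: "p = (\<psi>, w)" by (cases p)
  have r: "D.radj \<psi> (- w)" unfolding D.radj_def using H p by (auto simp: eq_neg_iff_add_eq_0)
  from C1[OF r] have "G \<psi> = w" by simp
  thus "p \<in> grGc" unfolding grGc_def Gc_def using r p by (auto intro!: image_eqI[of _ _ \<psi>])
qed

lemma grDc_eq: "grDc = (\<Inter>x\<in>dG. {p. inner (G x) (fst p) + inner x (snd p) = 0})"
proof (intro set_eqI iffI)
  fix p assume "p \<in> grDc"
  then obtain y z where p: "p = (y, D y)" and r: "G.radj y z" unfolding grDc_def Dc_def by auto
  have "D y = - z" using C0[OF r] by simp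
  thus "p \<in> (\<Inter>x\<in>dG. {p. inner (G x) (fst p) + inner x (snd p) = 0})"
    using r p by (auto simp: G.radj_def)
next
  fix p assume H: "p \<in> (\<Inter>x\<in>dG. {p. inner (G x) (fst p) + inner x (snd p) = 0})"
  obtain y w where p: "p = (y, w)" by (cases p)
  have r: "G.radj y (- w)" unfolding G.radj_def using H p by (auto simp: eq_neg_iff_add_eq_0)
  from C0[OF r] have "D y = w" by simp
  thus "p \<in> grDc" unfolding grDc_def Dc_def using r p by (auto intro!: image_eqI[of _ _ y])
qed

lemma grGc_closed: "closed grGc"
  unfolding grGc_eq by (intro closed_INT ballI closed_Collect_eq continuous_intros)
lemma grDc_closed: "closed grDc"
  unfolding grDc_eq by (intro closed_INT ballI closed_Collect_eq continuous_intros)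

lemma grGc_subspace: "subspace grGc"
  unfolding subspace_def grGc_def
proof (intro conjI ballI allI)
  have "(0, G 0) \<in> (\<lambda>x. (x, G x)) ` Gc" using Gc_0 by blast
  thus "0 \<in> (\<lambda>x. (x, G x)) ` Gc" by (simp add: G.T_0 zero_prod_def)
  fix c :: real and x y assume x: "x \<in> (\<lambda>x. (x, G x)) ` Gc" and y: "y \<in> (\<lambda>x. (x, G x)) ` Gc"
  obtain a b where ab: "a \<in> Gc" "b \<in> Gc" "x = (a, G a)" "y = (b, G b)" using x y by auto
  show "x + y \<in> (\<lambda>x. (x, G x)) ` Gc" using ab Gc_add Gc_dG G.T_add by (auto intro!: image_eqI[of _ _ "a + b"])
  show "c *\<^sub>R x \<in> (\<lambda>x. (x, G x)) ` Gc" using ab Gc_scale Gc_dG G.T_scale by (auto intro!: image_eqI[of _ _ "c *\<^sub>R a"])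
qed

lemma grDc_subspace: "subspace grDc"
  unfolding subspace_def grDc_def
proof (intro conjI ballI allI)
  have "(0, D 0) \<in> (\<lambda>x. (x, D x)) ` Dc" using Dc_0 by blast
  thus "0 \<in> (\<lambda>x. (x, D x)) ` Dc" by (simp add: D.T_0 zero_prod_def)
  fix c :: real and x y assume x: "x \<in> (\<lambda>x. (x, D x)) ` Dc" and y: "y \<in> (\<lambda>x. (x, D x)) ` Dc"
  obtain a b where ab: "a \<in> Dc" "b \<in> Dc" "x = (a, D a)" "y = (b, D b)" using x y by auto
  show "x + y \<in> (\<lambda>x. (x, D x)) ` Dc" using ab Dc_add Dc_dD D.T_add by (auto intro!: image_eqI[of _ _ "a + b"])
  show "c *\<^sub>R x \<in> (\<lambda>x. (x, D x)) ` Dc" using ab Dc_scale Dc_dD D.T_scale by (auto intro!: image_eqI[of _ _ "c *\<^sub>R a"])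
qed

lemma BD_G_eq: "BD_G J0 J1 dG G dD D = {x \<in> dG. \<forall>s\<in>Gc. inner x s + inner (G x) (G s) = 0}"
  unfolding BD_G_def orth_compl_in_def dom_Gcirc_eq
  using G.graph_orth_iff[of Gc] Gc_dG Gc_J by blast

lemma BD_D_eq: "BD_D J0 J1 dG G dD D = {x \<in> dD. \<forall>s\<in>Dc. inner x s + inner (D x) (D s) = 0}"
  unfolding BD_D_def orth_compl_in_def dom_Dcirc_eq
  using D.graph_orth_iff[of Dc] Dc_dD Dc_J by blast

lemma decomp_G:
  assumes x: "x \<in> dG"
  obtains c where "c \<in> Gc" "x - c \<in> BD_G J0 J1 dG G dD D"
proof -
  interpret W: csub grGc by (rule csubI[OF grGc_subspace grGc_closed])
  obtain c where c: "c \<in> Gc" "proj grGc (x, G x) = (c, G c)"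
    using W.proj_in[of "(x, G x)"] unfolding grGc_def by auto
  have cdG: "c \<in> dG" using Gc_dG c by blast
  have "inner (x - c) s + inner (G (x - c)) (G s) = 0" if s: "s \<in> Gc" for s
  proof -
    have "(s, G s) \<in> grGc" using s by (simp add: grGc_def)
    from W.proj_orth[OF this, of "(x, G x)"] show ?thesis
      using c G.T_diff[OF x cdG] by simp
  qed
  hence "x - c \<in> BD_G J0 J1 dG G dD D" unfolding BD_G_eq using G.dm_diff[OF x cdG] by blast
  with c that show ?thesis by blast
qed

lemma decomp_D:
  assumes x: "x \<in> dD"
  obtains c where "c \<in> Dc" "x - c \<in> BD_D J0 J1 dG G dD D"
proof -
  interpret W: csub grDc by (rule csubI[OF grDc_subspace grDc_closed])
  obtain c where c: "c \<in> Dc" "proj grDc (x, D x) = (c, D c)"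
    using W.proj_in[of "(x, D x)"] unfolding grDc_def by auto
  have cdD: "c \<in> dD" using Dc_dD c by blast
  have "inner (x - c) s + inner (D (x - c)) (D s) = 0" if s: "s \<in> Dc" for s
  proof -
    have "(s, D s) \<in> grDc" using s by (simp add: grDc_def)
    from W.proj_orth[OF this, of "(x, D x)"] show ?thesis
      using c D.T_diff[OF x cdD] by simp
  qed
  hence "x - c \<in> BD_D J0 J1 dG G dD D" unfolding BD_D_eq using D.dm_diff[OF x cdD] by blast
  with c that show ?thesis by blast
qed

end


context setting
begin

lemma BD_D_sub: "x \<in> BD_D J0 J1 dG G dD D \<Longrightarrow> x \<in> dD" using BD_D_eq by blast
lemma BD_G_sub: "x \<in> BD_G J0 J1 dG G dD D \<Longrightarrow> x \<in> dG" using BD_G_eq by blast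

lemma BD_D_diff: "x \<in> BD_D J0 J1 dG G dD D \<Longrightarrow> y \<in> BD_D J0 J1 dG G dD D \<Longrightarrow> x - y \<in> BD_D J0 J1 dG G dD D"
  unfolding BD_D_eq by (auto simp: D.dm_diff D.T_diff inner_diff_left algebra_simps)

lemma BD_D_orth: "s \<in> BD_D J0 J1 dG G dD D \<Longrightarrow> c \<in> Dc \<Longrightarrow> graph_inner J1 J0 D c s = 0"
proof -
  assume s: "s \<in> BD_D J0 J1 dG G dD D" and c: "c \<in> Dc"
  have "graph_inner J1 J0 D s c = 0" using s c unfolding BD_D_def orth_compl_in_def dom_Dcirc_eq by blast
  thus ?thesis using D.graph_inner_commute[of c s] by simp
qed

lemma BD_G_orth: "s \<in> BD_G J0 J1 dG G dD D \<Longrightarrow> c \<in> Gc \<Longrightarrow> graph_inner J0 J1 G c s = 0"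
proof -
  assume s: "s \<in> BD_G J0 J1 dG G dD D" and c: "c \<in> Gc"
  have "graph_inner J0 J1 G s c = 0" using s c unfolding BD_G_def orth_compl_in_def dom_Gcirc_eq by blast
  thus ?thesis using G.graph_inner_commute[of c s] by simp
qed

lemma proj_BD_D:
  assumes x: "x \<in> dD" and q: "q \<in> BD_D J0 J1 dG G dD D" and xq: "x - q \<in> Dc"
  shows "orth_proj (graph_inner J1 J0 D) (BD_D J0 J1 dG G dD D) x = q"
proof (rule D.orth_proj_graph[OF _ _ x q])
  show "BD_D J0 J1 dG G dD D \<subseteq> dD" using BD_D_sub by blast
  show "\<And>a b. a \<in> BD_D J0 J1 dG G dD D \<Longrightarrow> b \<in> BD_D J0 J1 dG G dD D \<Longrightarrow> a - b \<in> BD_D J0 J1 dG G dD D"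
    by (rule BD_D_diff)
  show "\<forall>s\<in>BD_D J0 J1 dG G dD D. graph_inner J1 J0 D (x - q) s = 0" using BD_D_orth xq by blast
qed

lemma re_ge_inner: "cstr J \<Longrightarrow> re_ge J T \<mu> \<Longrightarrow> \<mu> * (norm x)^2 \<le> inner (T x) x"
  unfolding re_ge_def using cstr.cinner_Re by metis

end

locale coefs = setting J0 J1 dG G dD D
  for J0 :: "'a::{real_inner,complete_space} \<Rightarrow> 'a" and J1 :: "'b::{real_inner,complete_space} \<Rightarrow> 'b"
  and dG G dD D +
  fixes a :: "'b \<Rightarrow> 'b" and m :: "'a \<Rightarrow> 'a" and \<mu> :: real
  assumes a_L: "bounded_clinear_op J1 a" and m_L: "bounded_clinear_op J0 m" and mu: "\<mu> > 0"
    and a_c: "re_ge J1 a \<mu>" and m_c: "re_ge J0 m \<mu>"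
begin

lemma a_bl: "bounded_linear a" using a_L by (simp add: bounded_clinear_op_def)
lemma m_bl: "bounded_linear m" using m_L by (simp add: bounded_clinear_op_def)
lemma a_coerc: "\<mu> * (norm x)^2 \<le> inner (a x) x" using re_ge_inner[OF _ a_c] G.K.cstr_axioms by blast
lemma m_coerc: "\<mu> * (norm x)^2 \<le> inner (m x) x" using re_ge_inner[OF _ m_c] G.J.cstr_axioms by blast
lemma a_diff: "a (x - y) = a x - a y" using a_bl by (simp add: linear_simps)
lemma m_diff: "m (x - y) = m x - m y" using m_bl by (simp add: linear_simps)
lemma a_add: "a (x + y) = a x + a y" using a_bl by (simp add: linear_simps)
lemma m_add: "m (x + y) = m x + m y" using m_bl by (simp add: linear_simps)

definition M :: "'a \<times> 'b \<Rightarrow> 'a \<times> 'b" where "M p = (m (fst p), a (snd p))"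

lemma M_bl: "bounded_linear M"
  unfolding M_def
  by (intro bounded_linear_Pair bounded_linear_compose[OF m_bl bounded_linear_fst]
      bounded_linear_compose[OF a_bl bounded_linear_snd])

lemma M_coerc: "\<mu> * (norm p)^2 \<le> inner (M p) p"
proof -
  obtain x y where p: "p = (x, y)" by (cases p)
  have "(norm p)^2 = (norm x)^2 + (norm y)^2" using p by (simp add: power2_norm_eq_inner)
  moreover have "inner (M p) p = inner (m x) x + inner (a y) y" using p by (simp add: M_def)
  ultimately show ?thesis using m_coerc[of x] a_coerc[of y] by (simp add: algebra_simps)
qed

definition NeuSol :: "'b \<Rightarrow> 'a \<Rightarrow> bool" where
  "NeuSol q u \<longleftrightarrow> u \<in> dG \<and> (\<forall>v\<in>dG. inner (m u) v + inner (a (G u)) (G v) = inner (D q) v + inner q (G v))"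

lemma neu_exists: "\<exists>u. NeuSol q u"
proof -
  interpret W: csub G.gr by (rule csubI[OF G.gr_subspace G.gr_closed])
  obtain \<gamma> where g: "\<gamma> \<in> G.gr" and eq: "\<forall>v\<in>G.gr. inner (M \<gamma>) v = inner (D q, q) v"
    using lax_milgram[OF G.gr_subspace G.gr_closed M_bl mu] M_coerc by blast
  obtain u where u: "u \<in> dG" "\<gamma> = (u, G u)" using g unfolding G.gr_def by auto
  have "NeuSol q u" unfolding NeuSol_def
  proof (intro conjI ballI)
    show "u \<in> dG" by fact
    fix v assume v: "v \<in> dG"
    hence "(v, G v) \<in> G.gr" by (simp add: G.gr_def)
    from eq[rule_format, OF this] show "inner (m u) v + inner (a (G u)) (G v) = inner (D q) v + inner q (G v)"
      using u by (simp add: M_def)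
  qed
  thus ?thesis by blast
qed

lemma neu_unique: "NeuSol q u \<Longrightarrow> NeuSol q u' \<Longrightarrow> u = u'"
proof -
  assume A: "NeuSol q u" "NeuSol q u'"
  define w where "w = u - u'"
  have u: "u \<in> dG" "u' \<in> dG" using A by (auto simp: NeuSol_def)
  have w: "w \<in> dG" using u G.dm_diff w_def by simp
  have "inner (m u) w + inner (a (G u)) (G w) = inner (m u') w + inner (a (G u')) (G w)"
    using A w by (simp add: NeuSol_def)
  hence "inner (m w) w + inner (a (G w)) (G w) = 0"
    unfolding w_def using u by (simp add: m_diff a_diff G.T_diff inner_diff_left)
  moreover have "\<mu> * (norm w)^2 \<le> inner (m w) w" by (rule m_coerc)
  moreover have "\<mu> * (norm (G w))^2 \<le> inner (a (G w)) (G w)" by (rule a_coerc)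
  moreover have "0 \<le> \<mu> * (norm (G w))^2" using mu by simp
  ultimately have "\<mu> * (norm w)^2 \<le> 0" by linarith
  hence "w = 0" using mu by (simp add: mult_le_0_iff)
  thus ?thesis by (simp add: w_def)
qed

lemma neu_flux:
  assumes N: "NeuSol q u" and q: "q \<in> dD"
  shows "a (G u) - q \<in> Dc \<and> a (G u) \<in> dD \<and> D (a (G u)) = m u"
proof -
  have u: "u \<in> dG" using N by (simp add: NeuSol_def)
  have r: "G.radj (a (G u) - q) (D q - m u)"
    unfolding G.radj_def
  proof
    fix v assume v: "v \<in> dG"
    have "inner (m u) v + inner (a (G u)) (G v) = inner (D q) v + inner q (G v)" using N v by (simp add: NeuSol_def)
    thus "inner (G v) (a (G u) - q) = inner v (D q - m u)"
      by (simp add: inner_diff_right inner_diff_left inner_commute algebra_simps)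
  qed
  from C0[OF r] have c: "a (G u) - q \<in> dD" "D (a (G u) - q) = m u - D q" by auto
  have "a (G u) = (a (G u) - q) + q" by simp
  hence dd: "a (G u) \<in> dD" using c(1) q D.dm_add by metis
  have "D (a (G u) - q) = D (a (G u)) - D q" using D.T_diff[OF dd q] .
  with c(2) have "D (a (G u)) = m u" by simp
  thus ?thesis using r dd unfolding Dc_def by blast
qed

lemma flux_neu:
  assumes u: "u \<in> dG" and dd: "a (G u) \<in> dD" and eq: "m u = D (a (G u))" and q: "q \<in> dD"
    and c: "a (G u) - q \<in> Dc"
  shows "NeuSol q u"
proof -
  obtain z where r: "G.radj (a (G u) - q) z" using c unfolding Dc_def by blast
  from C0[OF r] have "D (a (G u) - q) = - z" by simp
  hence "z = - D (a (G u) - q)" by simp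
  also have "\<dots> = D q - m u" using D.T_diff[OF dd q] eq by simp
  finally have z: "z = D q - m u" .
  show ?thesis unfolding NeuSol_def
  proof (intro conjI ballI)
    show "u \<in> dG" by fact
    fix v assume v: "v \<in> dG"
    have "inner (G v) (a (G u) - q) = inner v z" using r v by (simp add: G.radj_def)
    thus "inner (m u) v + inner (a (G u)) (G v) = inner (D q) v + inner q (G v)"
      using z by (simp add: inner_diff_right inner_diff_left inner_commute algebra_simps)
  qed
qed

definition DirSol :: "'a \<Rightarrow> 'a \<Rightarrow> bool" where
  "DirSol u0 u \<longleftrightarrow> u \<in> dG \<and> a (G u) \<in> dD \<and> m u - D (a (G u)) = 0 \<and> u - u0 \<in> dom_Gcirc J0 J1 dD D"

lemma dir_exists: assumes u0: "u0 \<in> dG" shows "\<exists>u. DirSol u0 u"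
proof -
  obtain \<gamma> where g: "\<gamma> \<in> grGc" and eq: "\<forall>v\<in>grGc. inner (M \<gamma>) v = inner (- M (u0, G u0)) v"
    using lax_milgram[OF grGc_subspace grGc_closed M_bl mu] M_coerc by blast
  obtain \<phi> where ph: "\<phi> \<in> Gc" "\<gamma> = (\<phi>, G \<phi>)" using g unfolding grGc_def by auto
  have phG: "\<phi> \<in> dG" using Gc_dG ph by blast
  define u where "u = u0 + \<phi>"
  have u: "u \<in> dG" using u0 phG G.dm_add u_def by simp
  have Gu: "G u = G u0 + G \<phi>" using G.T_add[OF u0 phG] u_def by simp
  have weak: "inner (m u) \<psi> + inner (a (G u)) (G \<psi>) = 0" if psi: "\<psi> \<in> Gc" for \<psi>
  proof -
    have "(\<psi>, G \<psi>) \<in> grGc" using psi by (simp add: grGc_def)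
    from eq[rule_format, OF this] have "inner (M (\<phi>, G \<phi>)) (\<psi>, G \<psi>) + inner (M (u0, G u0)) (\<psi>, G \<psi>) = 0"
      using ph by (simp add: inner_minus_left)
    thus ?thesis using Gu u_def by (simp add: M_def m_add a_add inner_add_left algebra_simps)
  qed
  have "a (G u) \<in> dD \<and> D (a (G u)) = m u"
  proof (rule D.double_adj)
    fix \<psi> z assume r: "D.radj \<psi> z"
    hence psi: "\<psi> \<in> Gc" unfolding Gc_def by blast
    from C1[OF r] have "G \<psi> = - z" by simp
    with weak[OF psi] show "inner (a (G u)) z = inner (m u) \<psi>" by (simp add: inner_minus_right)
  qed
  moreover have "u - u0 \<in> dom_Gcirc J0 J1 dD D" using ph u_def dom_Gcirc_eq by simp
  ultimately show ?thesis using u unfolding DirSol_def by auto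
qed

lemma dir_unique: "DirSol u0 u \<Longrightarrow> DirSol u0 u' \<Longrightarrow> u = u'"
proof -
  assume A: "DirSol u0 u" "DirSol u0 u'"
  define w where "w = u - u'"
  have u: "u \<in> dG" "u' \<in> dG" "a (G u) \<in> dD" "a (G u') \<in> dD" "m u = D (a (G u))" "m u' = D (a (G u'))"
    using A by (auto simp: DirSol_def)
  have wG: "w \<in> Gc" using A dom_Gcirc_eq Gc_diff[of "u - u0" "u' - u0"] w_def by (simp add: DirSol_def)
  then obtain z where r: "D.radj w z" unfolding Gc_def by blast
  from C1[OF r] have Gw: "G w = - z" by simp
  have Gw': "G w = G u - G u'" using G.T_diff u w_def by simp
  have sig: "a (G w) \<in> dD" "D (a (G w)) = m w"
    using u Gw' by (simp_all add: a_diff D.dm_diff D.T_diff m_diff w_def)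
  have "inner (D (a (G w))) w = inner (a (G w)) z" using r sig(1) by (simp add: D.radj_def)
  hence "inner (m w) w = - inner (a (G w)) (G w)" using sig Gw by (simp add: inner_minus_right)
  moreover have "\<mu> * (norm w)^2 \<le> inner (m w) w" by (rule m_coerc)
  moreover have "\<mu> * (norm (G w))^2 \<le> inner (a (G w)) (G w)" by (rule a_coerc)
  moreover have "0 \<le> \<mu> * (norm (G w))^2" using mu by simp
  ultimately have "\<mu> * (norm w)^2 \<le> 0" by linarith
  hence "w = 0" using mu by (simp add: mult_le_0_iff)
  thus ?thesis by (simp add: w_def)
qed

lemma DtN_eq: "u0 \<in> dG \<Longrightarrow> DirSol u0 u \<Longrightarrow>
   DtN J0 J1 dG G dD D a m u0 = orth_proj (graph_inner J1 J0 D) (BD_D J0 J1 dG G dD D) (a (G u))"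
proof -
  assume u0: "u0 \<in> dG" and S: "DirSol u0 u"
  have "(THE u. u \<in> dG \<and> a (G u) \<in> dD \<and> m u - D (a (G u)) = 0 \<and> u - u0 \<in> dom_Gcirc J0 J1 dD D) = u"
    using S dir_unique unfolding DirSol_def by blast
  thus ?thesis unfolding DtN_def Let_def by simp
qed

lemma DtN_inv_char:
  assumes q: "q \<in> BD_D J0 J1 dG G dD D" and N: "NeuSol q u"
  shows "DtN_inv J0 J1 dG G dD D a m q \<in> BD_G J0 J1 dG G dD D \<and> u - DtN_inv J0 J1 dG G dD D a m q \<in> Gc"
proof -
  let ?BG = "BD_G J0 J1 dG G dD D"
  let ?f = "DtN J0 J1 dG G dD D a m"
  have qD: "q \<in> dD" using q BD_D_sub by blast
  have u: "u \<in> dG" using N by (simp add: NeuSol_def)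
  have fl: "a (G u) - q \<in> Dc" "a (G u) \<in> dD" "D (a (G u)) = m u" using neu_flux[OF N qD] by auto
  obtain c where c: "c \<in> Gc" "u - c \<in> ?BG" using decomp_G[OF u] by blast
  have u0G: "u - c \<in> dG" using c BD_G_sub by blast
  have "DirSol (u - c) u" unfolding DirSol_def using u fl c dom_Gcirc_eq by simp
  hence "?f (u - c) = q" using DtN_eq[OF u0G] proj_BD_D[OF fl(2) q fl(1)] by simp
  hence "q \<in> ?f ` ?BG" using c by blast
  hence v0: "DtN_inv J0 J1 dG G dD D a m q \<in> ?BG" "?f (DtN_inv J0 J1 dG G dD D a m q) = q"
    unfolding DtN_inv_def by (auto intro: inv_into_into f_inv_into_f)
  define u0' where "u0' = DtN_inv J0 J1 dG G dD D a m q"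
  have u0'G: "u0' \<in> dG" using v0 BD_G_sub u0'_def by blast
  obtain u' where S': "DirSol u0' u'" using dir_exists[OF u0'G] by blast
  have u': "u' \<in> dG" "a (G u') \<in> dD" "m u' = D (a (G u'))" "u' - u0' \<in> Gc"
    using S' dom_Gcirc_eq by (auto simp: DirSol_def)
  obtain c' where c': "c' \<in> Dc" "a (G u') - c' \<in> BD_D J0 J1 dG G dD D" using decomp_D[OF u'(2)] by blast
  have "orth_proj (graph_inner J1 J0 D) (BD_D J0 J1 dG G dD D) (a (G u')) = a (G u') - c'"
    using proj_BD_D[OF u'(2) c'(2)] c'(1) by simp
  moreover have "?f u0' = orth_proj (graph_inner J1 J0 D) (BD_D J0 J1 dG G dD D) (a (G u'))"
    by (rule DtN_eq[OF u0'G S'])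
  ultimately have "a (G u') - c' = q" using v0 u0'_def by simp
  hence "a (G u') - q \<in> Dc" using c' by (metis diff_diff_eq2 diff_self diff_zero add_diff_cancel_left')
  hence "NeuSol q u'" using flux_neu[OF u'(1,2,3) qD] by simp
  hence "u' = u" using neu_unique N by blast
  thus ?thesis using v0 u' u0'_def by simp
qed

lemma neu_bound:
  assumes N: "NeuSol q u"
  shows "\<mu> * norm (u, G u) \<le> norm (D q, q)"
proof -
  have u: "u \<in> dG" using N by (simp add: NeuSol_def)
  have "inner (M (u, G u)) (u, G u) = inner (D q, q) (u, G u)"
    using N u by (simp add: NeuSol_def M_def)
  also have "\<dots> \<le> norm (D q, q) * norm (u, G u)" by (rule norm_cauchy_schwarz)
  finally have "\<mu> * (norm (u, G u))^2 \<le> norm (D q, q) * norm (u, G u)" using M_coerc[of "(u, G u)"] by linarith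
  thus ?thesis by (cases "norm (u, G u) = 0") (auto simp: power2_eq_square mult_le_cancel_right mult.assoc[symmetric])
qed

end


context setting
begin

definition kerG :: "'a set" where "kerG = {x \<in> dG. G x = 0}"
definition WG :: "'a set" where "WG = {x \<in> dG. \<forall>k\<in>kerG. inner x k = 0}"
definition RG :: "'b set" where "RG = G ` dG"

lemma kerG_subspace: "subspace kerG"
  unfolding subspace_def kerG_def using G.dm_0 G.T_0 G.dm_add G.T_add G.dm_scale G.T_scale by auto

lemma gr_mem: "(x, y) \<in> G.gr \<longleftrightarrow> x \<in> dG \<and> y = G x"
  unfolding G.gr_def by auto

lemma gr_limit:
  assumes x: "\<And>n. x n \<in> dG" and xa: "x \<longlonglongrightarrow> a" and gb: "(\<lambda>n. G (x n)) \<longlonglongrightarrow> b"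
  shows "a \<in> dG \<and> b = G a"
proof -
  have lim: "(\<lambda>n. (x n, G (x n))) \<longlonglongrightarrow> (a, b)" by (rule tendsto_Pair[OF xa gb])
  have mem: "\<And>n. (x n, G (x n)) \<in> G.gr" using x by (simp add: gr_mem)
  have "(a, b) \<in> G.gr" by (rule closed_sequentially[OF G.gr_closed mem lim])
  thus ?thesis by (simp add: gr_mem)
qed

lemma kerG_closed: "closed kerG"
proof (unfold closed_sequential_limits, intro allI impI, elim conjE)
  fix f l assume f: "\<forall>n. f n \<in> kerG" and fl: "f \<longlonglongrightarrow> l"
  have G0: "G (f n) = 0" for n using f unfolding kerG_def by blast
  have fd: "f n \<in> dG" for n using f unfolding kerG_def by blast
  have "(\<lambda>n. G (f n)) \<longlonglongrightarrow> 0" unfolding G0 by simp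
  from gr_limit[OF fd fl this] show "l \<in> kerG" by (simp add: kerG_def)
qed

lemma WG_sub: "x \<in> WG \<Longrightarrow> x \<in> dG" by (simp add: WG_def)
lemma WG_diff: "x \<in> WG \<Longrightarrow> y \<in> WG \<Longrightarrow> x - y \<in> WG"
  unfolding WG_def by (auto simp: G.dm_diff inner_diff_left)
lemma WG_scale: "x \<in> WG \<Longrightarrow> r *\<^sub>R x \<in> WG"
  unfolding WG_def by (auto simp: G.dm_scale)

lemma WG_rep: assumes x: "x \<in> dG" shows "\<exists>w\<in>WG. G w = G x \<and> x - w \<in> kerG"
proof -
  interpret Kc: csub kerG by (rule csubI[OF kerG_subspace kerG_closed])
  define p where "p = proj kerG x"
  have p: "p \<in> kerG" unfolding p_def by (rule Kc.proj_in)
  have pG: "p \<in> dG" "G p = 0" using p by (auto simp: kerG_def)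
  have "x - p \<in> WG" unfolding WG_def using Kc.proj_orth[of _ x] p_def G.dm_diff[OF x pG(1)] by auto
  moreover have "G (x - p) = G x" using G.T_diff[OF x pG(1)] pG by simp
  moreover have "x - (x - p) \<in> kerG" using p by simp
  ultimately show ?thesis by blast
qed

lemma poincare: "\<exists>C>0. \<forall>x\<in>WG. norm x \<le> C * norm (G x)"
proof (rule ccontr)
  assume "\<not> ?thesis"
  hence H: "\<forall>n::nat. \<exists>x\<in>WG. norm x > (real n + 1) * norm (G x)"
    by (metis not_le of_nat_0_le_iff add_nonneg_pos zero_less_one)
  then obtain x where xW: "\<And>n. x n \<in> WG" and xb: "\<And>n. norm (x n) > (real n + 1) * norm (G (x n))" by metis
  have xn0: "x n \<noteq> 0" for n using xb[of n] by (cases "x n = 0") (auto simp: G.T_0)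
  define y where "y n = (1 / norm (x n)) *\<^sub>R x n" for n
  have yW: "y n \<in> WG" for n using xW WG_scale y_def by simp
  have yd: "y n \<in> dG" for n using yW WG_sub by blast
  have ny: "norm (y n) = 1" for n using xn0 by (simp add: y_def)
  have Gy: "norm (G (y n)) < 1 / (real n + 1)" for n
  proof -
    have "G (y n) = (1 / norm (x n)) *\<^sub>R G (x n)" using G.T_scale WG_sub[OF xW] y_def by simp
    hence "norm (G (y n)) = norm (G (x n)) / norm (x n)" by simp
    also have "\<dots> < 1 / (real n + 1)" using xb[of n] xn0 by (simp add: divide_less_eq field_simps)
    finally show ?thesis .
  qed
  have bnd: "bounded ((\<lambda>x. (x, G x)) ` range y)"
  proof -
    have "norm (y n, G (y n)) \<le> 2" for n
    proof -
      have "norm (y n, G (y n)) \<le> norm (y n) + norm (G (y n))" by (rule norm_Pair_le)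
      also have "\<dots> \<le> 2" using ny[of n] Gy[of n] by (smt (verit) divide_le_eq_1 of_nat_0_le_iff)
      finally show ?thesis .
    qed
    thus ?thesis unfolding bounded_iff by blast
  qed
  have "compact (closure (range y))" using compact_emb bnd yd by blast
  hence sc: "seq_compact (closure (range y))" by (rule compact_imp_seq_compact)
  have yin: "\<forall>n. y n \<in> closure (range y)" using closure_subset by (metis range_eqI subsetD)
  obtain l r where "l \<in> closure (range y)" and r: "strict_mono r" and lim: "(y \<circ> r) \<longlonglongrightarrow> l"
    by (rule seq_compactE[OF sc yin])
  have G0: "(\<lambda>k. G (y (r k))) \<longlonglongrightarrow> 0"
  proof -
    have l0: "(\<lambda>k. 1 / (real (r k) + 1)) \<longlonglongrightarrow> 0"
      using LIMSEQ_subseq_LIMSEQ[OF LIMSEQ_inverse_real_of_nat r]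
      by (simp add: o_def inverse_eq_divide add.commute)
    have "\<forall>k. norm (G (y (r k))) \<le> 1 / (real (r k) + 1)" using Gy less_imp_le by blast
    from Lim_null_comparison[OF always_eventually[OF this] l0] show ?thesis .
  qed
  have lim': "(\<lambda>k. y (r k)) \<longlonglongrightarrow> l" using lim by (simp add: o_def)
  from gr_limit[of "\<lambda>k. y (r k)", OF yd lim' G0] have lK: "l \<in> kerG" by (simp add: kerG_def)
  have "(\<lambda>k. inner (y (r k)) l) \<longlonglongrightarrow> inner l l" using lim by (simp add: o_def tendsto_intros)
  moreover have "inner (y (r k)) l = 0" for k using yW lK by (simp add: WG_def)
  ultimately have "inner l l = 0" by (simp add: LIMSEQ_const_iff)
  hence "l = 0" by simp
  moreover have "(\<lambda>k. norm (y (r k))) \<longlonglongrightarrow> norm l" using lim by (simp add: o_def tendsto_intros)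
  ultimately show False using ny by (simp add: LIMSEQ_const_iff)
qed

lemma RG_rep: assumes "z \<in> RG" shows "\<exists>w\<in>WG. G w = z"
  using assms WG_rep unfolding RG_def by blast

lemma RG_subspace: "subspace RG"
  unfolding RG_def using subspace_lin_image G.dm_subspace
proof -
  show "subspace (G ` dG)" unfolding subspace_def
  proof (intro conjI ballI allI)
    show "0 \<in> G ` dG" using G.dm_0 G.T_0 by (metis image_eqI)
    fix c :: real and x y assume "x \<in> G ` dG" "y \<in> G ` dG"
    then obtain a b where ab: "a \<in> dG" "b \<in> dG" "x = G a" "y = G b" by auto
    show "x + y \<in> G ` dG" using ab G.dm_add G.T_add by (metis image_eqI)
    show "c *\<^sub>R x \<in> G ` dG" using ab G.dm_scale G.T_scale by (metis image_eqI)
  qed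
qed

lemma RG_J: assumes "z \<in> RG" shows "J1 z \<in> RG"
proof -
  obtain x where x: "x \<in> dG" "z = G x" using assms unfolding RG_def by blast
  have "J1 z = G (J0 x)" using G.T_J[OF x(1)] x(2) by simp
  thus ?thesis using G.dm_J[OF x(1)] unfolding RG_def by blast
qed
lemma RG_diff: "z \<in> RG \<Longrightarrow> z' \<in> RG \<Longrightarrow> z - z' \<in> RG" using RG_subspace subspace_diff by blast

lemma RG_closed: "closed RG"
proof (unfold closed_sequential_limits, intro allI impI, elim conjE)
  fix f l assume f: "\<forall>n. f n \<in> RG" and fl: "f \<longlonglongrightarrow> l"
  obtain C where C: "C > 0" "\<forall>x\<in>WG. norm x \<le> C * norm (G x)" using poincare by blast
  have "\<forall>n. \<exists>w. w \<in> WG \<and> G w = f n" using f RG_rep by blast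
  then obtain w where wW: "\<And>n. w n \<in> WG" and wf: "\<And>n. G (w n) = f n" by metis
  have "Cauchy f" using fl by (rule LIMSEQ_imp_Cauchy)
  have "Cauchy w"
  proof (rule metric_CauchyI)
    fix e :: real assume e: "e > 0"
    obtain N where N: "\<forall>m\<ge>N. \<forall>n\<ge>N. dist (f m) (f n) < e / C"
      using metric_CauchyD[OF \<open>Cauchy f\<close>, of "e / C"] C e by auto
    show "\<exists>N. \<forall>m\<ge>N. \<forall>n\<ge>N. dist (w m) (w n) < e"
    proof (intro exI allI impI)
      fix m n assume mn: "N \<le> m" "N \<le> n"
      have d: "w m - w n \<in> WG" using wW WG_diff by blast
      have "norm (w m - w n) \<le> C * norm (G (w m - w n))" using C d by blast
      also have "G (w m - w n) = f m - f n" using G.T_diff WG_sub wW wf by simp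
      also have "C * norm (f m - f n) < C * (e / C)"
        using N mn C by (intro mult_strict_left_mono) (auto simp: dist_norm)
      also have "\<dots> = e" using C by simp
      finally show "dist (w m) (w n) < e" by (simp add: dist_norm)
    qed
  qed
  then obtain x where x: "w \<longlonglongrightarrow> x" using Cauchy_convergent_iff convergent_def by blast
  have wd: "w n \<in> dG" for n using wW WG_sub by blast
  have "(\<lambda>n. G (w n)) \<longlonglongrightarrow> l" using fl wf by simp
  from gr_limit[OF wd x this] show "l \<in> RG" unfolding RG_def by auto
qed

end

context coefs
begin

lemma compress_eq: "compress J1 RG a x = proj RG (a x)"
proof -
  interpret R: csub RG by (rule csubI[OF RG_subspace RG_closed])
  show ?thesis unfolding compress_def
  proof (rule G.K.orth_proj_cinner)
    show "\<And>a b. a \<in> RG \<Longrightarrow> b \<in> RG \<Longrightarrow> a - b \<in> RG" by (rule RG_diff)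
    show "proj RG (a x) \<in> RG" by (rule R.proj_in)
    show "\<forall>s\<in>RG. cinner J1 (a x - proj RG (a x)) s = 0"
      using G.K.cinner_orth_iff[of RG] RG_J R.proj_orth by blast
  qed
qed

lemma compress_surj: assumes y: "y \<in> RG" shows "\<exists>x\<in>RG. compress J1 RG a x = y"
proof -
  interpret R: csub RG by (rule csubI[OF RG_subspace RG_closed])
  obtain x where x: "x \<in> RG" "\<forall>v\<in>RG. inner (a x) v = inner y v"
    using lax_milgram[OF RG_subspace RG_closed a_bl mu] a_coerc by blast
  have "proj RG (a x) = y" by (rule R.proj_unique[OF y]) (use x in \<open>simp add: inner_diff_left\<close>)
  thus ?thesis using x compress_eq by auto
qed

lemma compress_coerc: "x \<in> RG \<Longrightarrow> \<mu> * (norm x)^2 \<le> inner (compress J1 RG a x) x"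
proof -
  interpret R: csub RG by (rule csubI[OF RG_subspace RG_closed])
  assume x: "x \<in> RG"
  show ?thesis using a_coerc[of x] R.proj_inner[OF x, of "a x"] compress_eq by simp
qed

lemma compress_inj: "inj_on (compress J1 RG a) RG"
proof (rule inj_onI)
  interpret R: csub RG by (rule csubI[OF RG_subspace RG_closed])
  fix x y assume x: "x \<in> RG" and y: "y \<in> RG" and e: "compress J1 RG a x = compress J1 RG a y"
  have w: "x - y \<in> RG" using x y RG_diff by blast
  have "compress J1 RG a (x - y) = compress J1 RG a x - compress J1 RG a y"
    unfolding compress_eq by (simp add: a_diff R.proj_linear linear_diff)
  hence "compress J1 RG a (x - y) = 0" using e by simp
  hence "\<mu> * (norm (x - y))^2 \<le> 0" using compress_coerc[OF w] by simp
  hence "x - y = 0" using mu by (simp add: mult_le_0_iff)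
  thus "x = y" by simp
qed

lemma cinv: assumes y: "y \<in> RG"
  shows "compress_inv J1 RG a y \<in> RG \<and> compress J1 RG a (compress_inv J1 RG a y) = y"
proof -
  have "y \<in> compress J1 RG a ` RG" using compress_surj[OF y] by blast
  thus ?thesis unfolding compress_inv_def by (auto intro: inv_into_into f_inv_into_f)
qed

lemma cinv_f: "x \<in> RG \<Longrightarrow> compress_inv J1 RG a (compress J1 RG a x) = x"
  unfolding compress_inv_def by (rule inv_into_f_f[OF compress_inj])

lemma cinv_bound: assumes y: "y \<in> RG" shows "\<mu> * norm (compress_inv J1 RG a y) \<le> norm y"
proof -
  define x where "x = compress_inv J1 RG a y"
  have x: "x \<in> RG" "compress J1 RG a x = y" using cinv[OF y] x_def by auto
  have "\<mu> * (norm x)^2 \<le> inner y x" using compress_coerc[OF x(1)] x(2) by simp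
  also have "\<dots> \<le> norm y * norm x" by (rule norm_cauchy_schwarz)
  finally have "\<mu> * norm x * norm x \<le> norm y * norm x" by (simp add: power2_eq_square mult.assoc)
  hence "\<mu> * norm x \<le> norm y" by (cases "norm x = 0") (auto simp: mult_le_cancel_right)
  thus ?thesis by (simp add: x_def)
qed

end


lemma conv_bounded: "(f :: nat \<Rightarrow> 'v::real_normed_vector) \<longlonglongrightarrow> l \<Longrightarrow> \<exists>B. \<forall>n. norm (f n) \<le> B"
  using convergent_imp_Bseq[OF convergentI] BseqD by metis

lemma norm_le_onorm_inner:
  fixes v :: "'a::real_inner"
  shows "norm v \<le> onorm (\<lambda>y. inner v y)"
proof -
  have bl: "bounded_linear (\<lambda>y. inner v y)" by (rule bounded_linear_inner_right)
  have "norm v * norm v = inner v v" by (simp add: norm_eq_sqrt_inner)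
  also have "\<dots> \<le> norm (inner v v)" by simp
  also have "\<dots> \<le> onorm (\<lambda>y. inner v y) * norm v" by (rule onorm[OF bl])
  finally show ?thesis using onorm_pos_le[OF bl] by (cases "v = 0") (auto simp: mult_le_cancel_right)
qed

locale mainctx = setting J0 J1 dG G dD D
  for J0 :: "'a::{real_inner,complete_space} \<Rightarrow> 'a" and J1 :: "'b::{real_inner,complete_space} \<Rightarrow> 'b"
  and dG G dD D +
  fixes mm :: "nat \<Rightarrow> 'a \<Rightarrow> 'a" and m :: "'a \<Rightarrow> 'a"
    and aa :: "nat \<Rightarrow> 'b \<Rightarrow> 'b" and a :: "'b \<Rightarrow> 'b"
    and \<mu> :: real and qq :: "nat \<Rightarrow> 'b" and q :: 'b
  assumes mm_L: "\<forall>n. bounded_clinear_op J0 (mm n)" and m_L: "bounded_clinear_op J0 m"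
    and aa_L: "\<forall>n. bounded_clinear_op J1 (aa n)" and a_L: "bounded_clinear_op J1 a"
    and mu_pos: "\<mu> > 0"
    and mm_coerc: "\<forall>n. re_ge J0 (mm n) \<mu>" and m_coerc: "re_ge J0 m \<mu>"
    and aa_coerc: "\<forall>n. re_ge J1 (aa n) \<mu>" and a_coerc: "re_ge J1 a \<mu>"
    and m_wot: "\<forall>x y. (\<lambda>n. cinner J0 (mm n x) y) \<longlonglongrightarrow> cinner J0 (m x) y"
    and a_wot: "\<forall>x \<in> G ` dG. \<forall>y \<in> G ` dG.
                  (\<lambda>n. cinner J1 (compress_inv J1 (G ` dG) (aa n) x) y)
                    \<longlonglongrightarrow> cinner J1 (compress_inv J1 (G ` dG) a x) y"
    and qq_BD: "\<forall>n. qq n \<in> BD_D J0 J1 dG G dD D" and q_BD: "q \<in> BD_D J0 J1 dG G dD D"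
    and qq_lim: "(\<lambda>n. (qq n, D (qq n))) \<longlonglongrightarrow> (q, D q)"
begin

lemma Cl: "coefs J0 J1 dG G dD D a m \<mu>"
  by (intro coefs.intro setting_axioms coefs_axioms.intro a_L m_L mu_pos a_coerc m_coerc)
lemma Cn: "coefs J0 J1 dG G dD D (aa n) (mm n) \<mu>"
  using mm_L aa_L mm_coerc aa_coerc
  by (intro coefs.intro setting_axioms coefs_axioms.intro mu_pos) auto

lemma m_inner_conv: "(\<lambda>n. inner (mm n x) y) \<longlonglongrightarrow> inner (m x) y"
proof -
  have "(\<lambda>n. Re (cinner J0 (mm n x) y)) \<longlonglongrightarrow> Re (cinner J0 (m x) y)"
    using m_wot by (intro tendsto_Re) auto
  thus ?thesis using G.J.cinner_Re by simp
qed

lemma mm_bl: "bounded_linear (mm n)" using mm_L by (simp add: bounded_clinear_op_def)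

lemma mm_unif: "\<exists>Mb\<ge>0. \<forall>n x. norm (mm n x) \<le> Mb * norm x"
proof -
  have pw: "\<exists>B. \<forall>n. norm (mm n x) \<le> B" for x
  proof -
    have "\<exists>B. \<forall>n. onorm (\<lambda>y. inner (mm n x) y) \<le> B"
    proof (rule ubp)
      show "\<And>n. bounded_linear (\<lambda>y. inner (mm n x) y)" by (rule bounded_linear_inner_right)
      fix y show "\<exists>B. \<forall>n. norm (inner (mm n x) y) \<le> B" by (rule conv_bounded[OF m_inner_conv])
    qed
    thus ?thesis using norm_le_onorm_inner order_trans by metis
  qed
  obtain Mb where Mb: "\<forall>n. onorm (mm n) \<le> Mb" using ubp[OF mm_bl pw] by blast
  have "\<forall>n x. norm (mm n x) \<le> max Mb 0 * norm x"
  proof (intro allI)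
    fix n x
    have "norm (mm n x) \<le> onorm (mm n) * norm x" by (rule onorm[OF mm_bl])
    also have "\<dots> \<le> max Mb 0 * norm x" using Mb by (intro mult_right_mono) (simp_all add: le_max_iff_disj)
    finally show "norm (mm n x) \<le> max Mb 0 * norm x" .
  qed
  thus ?thesis by (intro exI[of _ "max Mb 0"]) auto
qed

end


context setting
begin

lemma graph_bdd_subseq:
  assumes x: "\<And>n. x n \<in> dG" and b1: "\<And>n. norm (x n) \<le> B" and b2: "\<And>n. norm (G (x n)) \<le> B'"
  shows "\<exists>l s. strict_mono (s::nat\<Rightarrow>nat) \<and> (x \<circ> s) \<longlonglongrightarrow> l"
proof -
  have "bounded ((\<lambda>x. (x, G x)) ` range x)"
    unfolding bounded_iff
  proof (intro exI ballI)
    fix p assume "p \<in> (\<lambda>x. (x, G x)) ` range x"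
    then obtain n where p: "p = (x n, G (x n))" by auto
    have "norm p \<le> norm (x n) + norm (G (x n))" unfolding p by (rule norm_Pair_le)
    also have "\<dots> \<le> B + B'" using b1 b2 by (intro add_mono)
    finally show "norm p \<le> B + B'" .
  qed
  moreover have "range x \<subseteq> dG" using x by auto
  ultimately have "compact (closure (range x))" using compact_emb by blast
  hence sc: "seq_compact (closure (range x))" by (rule compact_imp_seq_compact)
  have xin: "\<forall>n. x n \<in> closure (range x)" using closure_subset by (metis range_eqI subsetD)
  obtain l s where "l \<in> closure (range x)" "strict_mono (s::nat\<Rightarrow>nat)" "(x \<circ> s) \<longlonglongrightarrow> l"
    by (rule seq_compactE[OF sc xin])
  thus ?thesis by blast
qed

end

context mainctx
begin

definition uL where "uL = (SOME u. coefs.NeuSol dG G D a m q u)"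
definition un where "un n = (SOME u. coefs.NeuSol dG G D (aa n) (mm n) (qq n) u)"

lemma uL_sol: "coefs.NeuSol dG G D a m q uL"
  unfolding uL_def by (rule someI_ex[OF coefs.neu_exists[OF Cl]])
lemma un_sol: "coefs.NeuSol dG G D (aa n) (mm n) (qq n) (un n)"
  unfolding un_def by (rule someI_ex[OF coefs.neu_exists[OF Cn]])

lemma uL_dG: "uL \<in> dG" using uL_sol coefs.NeuSol_def[OF Cl] by blast
lemma un_dG: "un n \<in> dG" using un_sol coefs.NeuSol_def[OF Cn] by blast
lemma uL_eq: "v \<in> dG \<Longrightarrow> inner (m uL) v + inner (a (G uL)) (G v) = inner (D q) v + inner q (G v)"
  using uL_sol coefs.NeuSol_def[OF Cl] by blast
lemma un_eq: "v \<in> dG \<Longrightarrow> inner (mm n (un n)) v + inner (aa n (G (un n))) (G v) = inner (D (qq n)) v + inner (qq n) (G v)"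
  using un_sol coefs.NeuSol_def[OF Cn] by blast

lemma qq_bound: "\<exists>Bq. \<forall>n. norm (D (qq n), qq n) \<le> Bq"
proof -
  obtain B where "\<forall>n. norm (qq n, D (qq n)) \<le> B" using conv_bounded[OF qq_lim] by blast
  moreover have "norm (D (qq n), qq n) = norm (qq n, D (qq n))" for n by (simp add: norm_Pair add.commute)
  ultimately show ?thesis by auto
qed

lemma un_bound: "\<exists>B. \<forall>n. norm (un n, G (un n)) \<le> B"
proof -
  obtain Bq where Bq: "\<forall>n. norm (D (qq n), qq n) \<le> Bq" using qq_bound by blast
  have "\<mu> * norm (un n, G (un n)) \<le> Bq" for n using coefs.neu_bound[OF Cn un_sol, of n] Bq by (meson order_trans)
  hence "norm (un n, G (un n)) \<le> Bq / \<mu>" for n using mu_pos by (simp add: field_simps)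
  thus ?thesis by blast
qed

definition y0 where "y0 = compress J1 RG a (G uL)"

lemma RG_G: "x \<in> dG \<Longrightarrow> G x \<in> RG" by (simp add: RG_def)

lemma y0_RG: "y0 \<in> RG"
proof -
  interpret R: csub RG by (rule csubI[OF RG_subspace RG_closed])
  show ?thesis unfolding y0_def coefs.compress_eq[OF Cl] by (rule R.proj_in)
qed

lemma y0_inner: "v \<in> dG \<Longrightarrow> inner (a (G uL)) (G v) = inner y0 (G v)"
proof -
  interpret R: csub RG by (rule csubI[OF RG_subspace RG_closed])
  assume v: "v \<in> dG"
  show ?thesis unfolding y0_def coefs.compress_eq[OF Cl] using R.proj_inner[OF RG_G[OF v]] by simp
qed

lemma y0_inv: "compress_inv J1 RG a y0 = G uL"
  unfolding y0_def by (rule coefs.cinv_f[OF Cl RG_G[OF uL_dG]])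

definition xn where "xn n = compress_inv J1 RG (aa n) y0"

lemma xn_RG: "xn n \<in> RG" using coefs.cinv[OF Cn y0_RG] xn_def by simp
lemma xn_bound: "\<mu> * norm (xn n) \<le> norm y0" unfolding xn_def by (rule coefs.cinv_bound[OF Cn y0_RG])
lemma xn_inner: "v \<in> dG \<Longrightarrow> inner (aa n (xn n)) (G v) = inner y0 (G v)"
proof -
  interpret R: csub RG by (rule csubI[OF RG_subspace RG_closed])
  assume v: "v \<in> dG"
  have "proj RG (aa n (xn n)) = y0" using coefs.cinv[OF Cn y0_RG] coefs.compress_eq[OF Cn] xn_def by simp
  thus ?thesis using R.proj_inner[OF RG_G[OF v], of "aa n (xn n)"] by simp
qed

lemma xn_weak_RG: "z \<in> RG \<Longrightarrow> (\<lambda>n. inner (xn n) z) \<longlonglongrightarrow> inner (G uL) z"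
proof -
  assume z: "z \<in> RG"
  have "(\<lambda>n. Re (cinner J1 (compress_inv J1 (G ` dG) (aa n) y0) z)) \<longlonglongrightarrow> Re (cinner J1 (compress_inv J1 (G ` dG) a y0) z)"
    using a_wot y0_RG z unfolding RG_def by (intro tendsto_Re) blast
  thus ?thesis using G.K.cinner_Re y0_inv xn_def RG_def by simp
qed

lemma xn_weak: "(\<lambda>n. inner (xn n) z) \<longlonglongrightarrow> inner (G uL) z"
proof -
  interpret R: csub RG by (rule csubI[OF RG_subspace RG_closed])
  have e: "inner w z = inner w (proj RG z)" if "w \<in> RG" for w
    using R.proj_inner[OF that, of z] by (simp add: inner_commute)
  have "(\<lambda>n. inner (xn n) (proj RG z)) \<longlonglongrightarrow> inner (G uL) (proj RG z)" by (rule xn_weak_RG[OF R.proj_in])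
  thus ?thesis using e[OF xn_RG] e[OF RG_G[OF uL_dG]] by simp
qed

definition wn where "wn n = (SOME w. w \<in> WG \<and> G w = xn n)"
definition up where "up = (SOME w. w \<in> WG \<and> G w = G uL \<and> uL - w \<in> kerG)"

lemma wn: "wn n \<in> WG \<and> G (wn n) = xn n"
  unfolding wn_def by (rule someI_ex) (use RG_rep[OF xn_RG] in blast)
lemma up: "up \<in> WG \<and> G up = G uL \<and> uL - up \<in> kerG"
  unfolding up_def by (rule someI_ex) (use WG_rep[OF uL_dG] in blast)

lemma wn_dG: "wn n \<in> dG" using wn WG_sub by blast
lemma up_dG: "up \<in> dG" using up WG_sub by blast

lemma wn_bound: "\<exists>B. \<forall>n. norm (wn n) \<le> B \<and> norm (G (wn n)) \<le> B"
proof -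
  obtain C where C: "C > 0" "\<forall>x\<in>WG. norm x \<le> C * norm (G x)" using poincare by blast
  have x: "norm (xn n) \<le> norm y0 / \<mu>" for n using xn_bound[of n] mu_pos by (simp add: field_simps)
  have "norm (wn n) \<le> C * (norm y0 / \<mu>)" for n
  proof -
    have "norm (wn n) \<le> C * norm (G (wn n))" using C wn[of n] by blast
    also have "\<dots> \<le> C * (norm y0 / \<mu>)" using wn[of n] x[of n] C by (intro mult_left_mono) auto
    finally show ?thesis .
  qed
  hence "\<forall>n. norm (wn n) \<le> max (C * (norm y0 / \<mu>)) (norm y0 / \<mu>) \<and> norm (G (wn n)) \<le> max (C * (norm y0 / \<mu>)) (norm y0 / \<mu>)"
    using x wn by (auto simp: le_max_iff_disj)
  thus ?thesis by blast
qed

lemma wn_conv: "wn \<longlonglongrightarrow> up"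
proof (rule subseq_principle)
  fix r :: "nat \<Rightarrow> nat" assume r: "strict_mono r"
  obtain B where B: "\<forall>n. norm (wn n) \<le> B \<and> norm (G (wn n)) \<le> B" using wn_bound by blast
  obtain l s where s: "strict_mono (s::nat\<Rightarrow>nat)" and lim: "((wn \<circ> r) \<circ> s) \<longlonglongrightarrow> l"
    using graph_bdd_subseq[of "wn \<circ> r" B B] wn_dG B by auto
  have "l = up"
  proof -
    have lim': "(\<lambda>k. wn (r (s k))) \<longlonglongrightarrow> l" using lim by (simp add: o_def)
    have rs: "strict_mono (r \<circ> s)" using r s by (rule strict_mono_o)
    have H: "inner (l - up) z = inner 0 \<psi>" if rad: "G.radj \<psi> z" for \<psi> z
    proof -
      have e: "inner (G (wn k)) \<psi> = inner (wn k) z" for k using rad wn_dG by (simp add: G.radj_def)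
      have "(\<lambda>k. inner (xn ((r \<circ> s) k)) \<psi>) \<longlonglongrightarrow> inner (G uL) \<psi>"
        using LIMSEQ_subseq_LIMSEQ[OF xn_weak rs] by (simp add: o_def)
      hence "(\<lambda>k. inner (wn (r (s k))) z) \<longlonglongrightarrow> inner (G uL) \<psi>" using e wn by (simp add: o_def)
      moreover have "(\<lambda>k. inner (wn (r (s k))) z) \<longlonglongrightarrow> inner l z" using lim' by (intro tendsto_intros)
      ultimately have "inner l z = inner (G uL) \<psi>" using LIMSEQ_unique by blast
      also have "\<dots> = inner (G up) \<psi>" using up by simp
      also have "\<dots> = inner up z" using rad up_dG by (simp add: G.radj_def)
      finally show ?thesis by (simp add: inner_diff_left)
    qed
    from G.double_adj[OF H] have d: "l - up \<in> dG" "G (l - up) = 0" by auto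
    hence lk: "l - up \<in> kerG" by (simp add: kerG_def)
    have "inner l k = 0" if k: "k \<in> kerG" for k
    proof -
      have "(\<lambda>n. inner (wn (r (s n))) k) \<longlonglongrightarrow> inner l k" using lim' by (intro tendsto_intros)
      moreover have "inner (wn (r (s n))) k = 0" for n using wn k by (simp add: WG_def)
      ultimately show ?thesis by (simp add: LIMSEQ_const_iff)
    qed
    moreover have "inner up k = 0" if "k \<in> kerG" for k using up that by (simp add: WG_def)
    ultimately have "inner (l - up) (l - up) = 0" using lk by (simp add: inner_diff_left)
    thus ?thesis by simp
  qed
  thus "\<exists>s. strict_mono s \<and> (wn \<circ> r \<circ> s) \<longlonglongrightarrow> up" using s lim by blast
qed

end


context mainctx
begin

definition ut where "ut n = uL + (wn n - up)"
definition dn where "dn n = un n - ut n"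

lemma ut_dG: "ut n \<in> dG" unfolding ut_def using uL_dG wn_dG up_dG G.dm_add G.dm_diff by simp
lemma G_ut: "G (ut n) = xn n"
proof -
  have "G (ut n) = G uL + (G (wn n) - G up)"
    unfolding ut_def using uL_dG wn_dG up_dG G.dm_diff G.T_add G.T_diff by simp
  thus ?thesis using wn up by simp
qed
lemma ut_conv: "(\<lambda>n. ut n - uL) \<longlonglongrightarrow> 0"
proof -
  have "(\<lambda>n. wn n - up) \<longlonglongrightarrow> up - up" by (intro tendsto_intros wn_conv)
  thus ?thesis by (simp add: ut_def)
qed
lemma dn_dG: "dn n \<in> dG" unfolding dn_def using un_dG ut_dG G.dm_diff by simp
lemma G_dn: "G (dn n) = G (un n) - xn n" unfolding dn_def using un_dG ut_dG G.T_diff G_ut by simp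

lemma mm_lin: "linear (mm n)" using mm_bl bounded_linear.linear by blast
lemma aa_bl: "bounded_linear (aa n)" using aa_L by (simp add: bounded_clinear_op_def)
lemma aa_lin: "linear (aa n)" using aa_bl bounded_linear.linear by blast

lemma dn_eq:
  assumes v: "v \<in> dG"
  shows "inner (mm n (dn n)) v + inner (aa n (G (dn n))) (G v)
       = inner (D (qq n) - D q) v + inner (qq n - q) (G v) - inner (mm n (ut n - uL)) v - inner (mm n uL - m uL) v"
proof -
  have "dn n = un n - (ut n - uL) - uL" by (simp add: dn_def)
  hence A: "inner (mm n (dn n)) v = inner (mm n (un n)) v - inner (mm n (ut n - uL)) v - inner (mm n uL) v"
    by (simp add: linear_diff[OF mm_lin] inner_diff_left)
  have B: "inner (aa n (G (dn n))) (G v) = inner (aa n (G (un n))) (G v) - inner (a (G uL)) (G v)"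
    unfolding G_dn using xn_inner[OF v] y0_inner[OF v] by (simp add: linear_diff[OF aa_lin] inner_diff_left)
  show ?thesis using A B un_eq[OF v, of n] uL_eq[OF v] by (simp add: inner_diff_left)
qed

lemma dn_bound: "\<exists>B\<ge>0. \<forall>n. norm (dn n, G (dn n)) \<le> B"
proof -
  obtain B1 where B1: "\<forall>n. norm (un n, G (un n)) \<le> B1" using un_bound by blast
  obtain B2 where B2: "\<forall>n. norm (wn n) \<le> B2 \<and> norm (G (wn n)) \<le> B2" using wn_bound by blast
  have "norm (dn n, G (dn n)) \<le> B1 + (norm uL + B2 + norm up + B2)" for n
  proof -
    have e: "(dn n, G (dn n)) = (un n, G (un n)) - (ut n, G (ut n))"
      using G_dn G_ut by (simp add: dn_def)
    have h1: "norm (dn n, G (dn n)) \<le> norm (un n, G (un n)) + norm (ut n, G (ut n))"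
      unfolding e by (rule norm_triangle_ineq4)
    have h5: "G (ut n) = G (wn n)" using G_ut wn by simp
    have h2: "norm (ut n, G (ut n)) \<le> norm (ut n) + norm (G (wn n))" using norm_Pair_le[of "ut n" "G (ut n)"] h5 by simp
    have h3: "norm (ut n) \<le> norm uL + norm (wn n - up)" unfolding ut_def by (rule norm_triangle_ineq)
    have h4: "norm (wn n - up) \<le> norm (wn n) + norm up" by (rule norm_triangle_ineq4)
    have h6: "norm (un n, G (un n)) \<le> B1" "norm (wn n) \<le> B2" "norm (G (wn n)) \<le> B2" using B1 B2 by auto
    show ?thesis using h1 h2 h3 h4 h6 by linarith
  qed
  moreover have "0 \<le> B1" using B1 by (meson norm_ge_zero order_trans)
  moreover have "0 \<le> B2" using B2 by (meson norm_ge_zero order_trans)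
  ultimately show ?thesis by (intro exI[of _ "B1 + (norm uL + B2 + norm up + B2)"]) auto
qed

lemma t_conv: "(\<lambda>n. inner (mm n uL - m uL) (dn n)) \<longlonglongrightarrow> 0"
proof (rule subseq_principle)
  fix r :: "nat \<Rightarrow> nat" assume r: "strict_mono r"
  obtain B where B: "B \<ge> 0" "\<forall>n. norm (dn n, G (dn n)) \<le> B" using dn_bound by blast
  have b1: "norm (dn n) \<le> B" and b2: "norm (G (dn n)) \<le> B" for n
    using B norm_fst_le norm_snd_le order_trans by metis+
  obtain l s where s: "strict_mono (s::nat\<Rightarrow>nat)" and lim: "((dn \<circ> r) \<circ> s) \<longlonglongrightarrow> l"
    using graph_bdd_subseq[of "dn \<circ> r" B B] dn_dG b1 b2 by auto
  have rs: "strict_mono (r \<circ> s)" using r s by (rule strict_mono_o)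
  obtain Mb where Mb: "Mb \<ge> 0" "\<forall>n x. norm (mm n x) \<le> Mb * norm x" using mm_unif by blast
  let ?k = "\<lambda>k. r (s k)"
  have c1: "(\<lambda>k. inner (mm (?k k) uL - m uL) l) \<longlonglongrightarrow> 0"
  proof -
    have "(\<lambda>k. inner (mm ((r \<circ> s) k) uL) l) \<longlonglongrightarrow> inner (m uL) l"
      using LIMSEQ_subseq_LIMSEQ[OF m_inner_conv rs] by (simp add: o_def)
    hence "(\<lambda>k. inner (mm (?k k) uL) l - inner (m uL) l) \<longlonglongrightarrow> inner (m uL) l - inner (m uL) l"
      by (intro tendsto_diff tendsto_const) (simp add: o_def)
    thus ?thesis by (simp add: inner_diff_left)
  qed
  have c2: "(\<lambda>k. inner (mm (?k k) uL - m uL) (dn (?k k) - l)) \<longlonglongrightarrow> 0"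
  proof (rule Lim_null_comparison[OF always_eventually])
    let ?Bm = "Mb * norm uL + norm (m uL)"
    show "\<forall>k. norm (inner (mm (?k k) uL - m uL) (dn (?k k) - l)) \<le> ?Bm * norm (dn (?k k) - l)"
    proof
      fix k
      have "norm (inner (mm (?k k) uL - m uL) (dn (?k k) - l)) \<le> norm (mm (?k k) uL - m uL) * norm (dn (?k k) - l)"
        by (simp add: Cauchy_Schwarz_ineq2)
      also have "norm (mm (?k k) uL - m uL) \<le> ?Bm"
        using Mb norm_triangle_ineq4[of "mm (?k k) uL" "m uL"] by (smt (verit))
      finally show "norm (inner (mm (?k k) uL - m uL) (dn (?k k) - l)) \<le> ?Bm * norm (dn (?k k) - l)"
        by (simp add: mult_right_mono)
    qed
    have "(\<lambda>k. dn (?k k) - l) \<longlonglongrightarrow> 0" using lim by (simp add: o_def LIM_zero)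
    hence "(\<lambda>k. norm (dn (?k k) - l)) \<longlonglongrightarrow> 0" by (simp add: tendsto_norm_zero)
    thus "(\<lambda>k. ?Bm * norm (dn (?k k) - l)) \<longlonglongrightarrow> 0" using tendsto_mult_right_zero by blast
  qed
  have "(\<lambda>k. inner (mm (?k k) uL - m uL) l + inner (mm (?k k) uL - m uL) (dn (?k k) - l)) \<longlonglongrightarrow> 0"
    using tendsto_add_zero[OF c1 c2] .
  hence "(\<lambda>k. inner (mm (?k k) uL - m uL) (dn (?k k))) \<longlonglongrightarrow> 0" by (simp add: inner_diff_right)
  thus "\<exists>s. strict_mono s \<and> ((\<lambda>n. inner (mm n uL - m uL) (dn n)) \<circ> r \<circ> s) \<longlonglongrightarrow> 0"
    using s by (intro exI[of _ s]) (simp add: o_def)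
qed

end


context mainctx
begin

lemma e_conv: "(\<lambda>n. norm (D (qq n) - D q, qq n - q)) \<longlonglongrightarrow> 0"
proof -
  have f: "(\<lambda>n. qq n) \<longlonglongrightarrow> q" using tendsto_fst[OF qq_lim] by simp
  have s: "(\<lambda>n. D (qq n)) \<longlonglongrightarrow> D q" using tendsto_snd[OF qq_lim] by simp
  have "(\<lambda>n. (D (qq n) - D q, qq n - q)) \<longlonglongrightarrow> (D q - D q, q - q)"
    by (intro tendsto_Pair tendsto_diff f s tendsto_const)
  hence "(\<lambda>n. (D (qq n) - D q, qq n - q)) \<longlonglongrightarrow> 0" by (simp add: zero_prod_def)
  thus ?thesis by (rule tendsto_norm_zero)
qed

lemma mm_coerc': "\<mu> * (norm x)^2 \<le> inner (mm n x) x"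
  using re_ge_inner[OF G.J.cstr_axioms] mm_coerc by blast
lemma aa_coerc': "\<mu> * (norm x)^2 \<le> inner (aa n x) x"
  using re_ge_inner[OF G.K.cstr_axioms] aa_coerc by blast

lemma gn_conv: "(\<lambda>n. norm (dn n, G (dn n))) \<longlonglongrightarrow> 0"
proof -
  obtain B where B: "B \<ge> 0" "\<forall>n. norm (dn n, G (dn n)) \<le> B" using dn_bound by blast
  obtain Mb where Mb: "Mb \<ge> 0" "\<forall>n x. norm (mm n x) \<le> Mb * norm x" using mm_unif by blast
  define g where "g n = norm (dn n, G (dn n))" for n
  define t where "t n = inner (mm n uL - m uL) (dn n)" for n
  define e where "e n = norm (D (qq n) - D q, qq n - q)" for n
  define h where "h n = e n * B + Mb * norm (ut n - uL) * B + \<bar>t n\<bar>" for n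
  have key: "\<mu> * (g n)^2 \<le> h n" for n
  proof -
    have g2: "(g n)^2 = (norm (dn n))^2 + (norm (G (dn n)))^2" by (simp add: g_def norm_Pair)
    have c1: "\<mu> * (norm (dn n))^2 \<le> inner (mm n (dn n)) (dn n)" by (rule mm_coerc')
    have c2: "\<mu> * (norm (G (dn n)))^2 \<le> inner (aa n (G (dn n))) (G (dn n))" by (rule aa_coerc')
    have eq: "inner (mm n (dn n)) (dn n) + inner (aa n (G (dn n))) (G (dn n))
       = inner (D (qq n) - D q, qq n - q) (dn n, G (dn n)) - inner (mm n (ut n - uL)) (dn n) - t n"
      using dn_eq[OF dn_dG, of n n] by (simp add: t_def)
    have gB: "g n \<le> B" using B g_def by simp
    have e0: "e n \<ge> 0" by (simp add: e_def)
    have p1: "inner (D (qq n) - D q, qq n - q) (dn n, G (dn n)) \<le> e n * B"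
    proof -
      have "inner (D (qq n) - D q, qq n - q) (dn n, G (dn n)) \<le> e n * g n"
        unfolding e_def g_def by (rule norm_cauchy_schwarz)
      also have "\<dots> \<le> e n * B" using gB e0 by (rule mult_left_mono)
      finally show ?thesis .
    qed
    have p2: "- inner (mm n (ut n - uL)) (dn n) \<le> Mb * norm (ut n - uL) * B"
    proof -
      have "- inner (mm n (ut n - uL)) (dn n) \<le> norm (mm n (ut n - uL)) * norm (dn n)"
        using Cauchy_Schwarz_ineq2[of "mm n (ut n - uL)" "dn n"] by linarith
      also have "\<dots> \<le> (Mb * norm (ut n - uL)) * B"
        using Mb B norm_fst_le[of "dn n" "G (dn n)"] by (intro mult_mono) (auto intro: order_trans)
      finally show ?thesis by simp
    qed
    have p3: "- t n \<le> \<bar>t n\<bar>" by simp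
    have "\<mu> * (g n)^2 = \<mu> * (norm (dn n))^2 + \<mu> * (norm (G (dn n)))^2" by (simp add: g2 algebra_simps)
    also have "\<dots> \<le> h n" using c1 c2 eq p1 p2 p3 unfolding h_def by linarith
    finally show ?thesis .
  qed
  have hc: "h \<longlonglongrightarrow> 0"
  proof -
    have a1: "(\<lambda>n. e n * B) \<longlonglongrightarrow> 0 * B" using e_conv unfolding e_def by (intro tendsto_mult tendsto_const)
    have "(\<lambda>n. norm (ut n - uL)) \<longlonglongrightarrow> 0" using ut_conv by (rule tendsto_norm_zero)
    hence a2: "(\<lambda>n. Mb * norm (ut n - uL) * B) \<longlonglongrightarrow> Mb * 0 * B" by (intro tendsto_mult tendsto_const)
    have a3: "(\<lambda>n. \<bar>t n\<bar>) \<longlonglongrightarrow> 0" using t_conv unfolding t_def by (rule tendsto_rabs_zero)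
    have "h \<longlonglongrightarrow> 0 * B + Mb * 0 * B + 0" unfolding h_def by (intro tendsto_add a1 a2 a3)
    thus ?thesis by simp
  qed
  have "(\<lambda>n. (g n)^2) \<longlonglongrightarrow> 0"
  proof (rule tendsto_sandwich[of "\<lambda>n. 0" _ _ "\<lambda>n. h n / \<mu>"])
    show "\<forall>\<^sub>F n in sequentially. 0 \<le> (g n)^2" by simp
    show "\<forall>\<^sub>F n in sequentially. (g n)^2 \<le> h n / \<mu>"
      using key mu_pos by (intro always_eventually allI) (simp add: field_simps mult.commute)
    show "(\<lambda>n. 0) \<longlonglongrightarrow> (0::real)" by simp
    show "(\<lambda>n. h n / \<mu>) \<longlonglongrightarrow> 0" using tendsto_divide[OF hc tendsto_const, of \<mu>] mu_pos by simp
  qed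
  hence "(\<lambda>n. sqrt ((g n)^2)) \<longlonglongrightarrow> sqrt 0" by (intro tendsto_real_sqrt)
  moreover have "sqrt ((g n)^2) = g n" for n by (simp add: g_def)
  ultimately show ?thesis by (simp add: g_def)
qed

lemma real_weak:
  assumes v: "v \<in> dG"
  shows "(\<lambda>n. inner (un n) v + inner (G (un n)) (G v)) \<longlonglongrightarrow> inner uL v + inner (G uL) (G v)"
proof -
  have dec: "inner (un n) v + inner (G (un n)) (G v)
     = inner uL v + inner (ut n - uL) v + inner (xn n) (G v) + inner (dn n, G (dn n)) (v, G v)" for n
  proof -
    have e1: "un n = uL + (ut n - uL) + dn n" by (simp add: dn_def)
    have e2: "G (un n) = xn n + G (dn n)" using G_dn by simp
    have i1: "inner (un n) v = inner uL v + inner (ut n - uL) v + inner (dn n) v"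
      by (subst e1) (simp only: inner_add_left)
    have i2: "inner (G (un n)) (G v) = inner (xn n) (G v) + inner (G (dn n)) (G v)"
      by (subst e2) (simp only: inner_add_left)
    have i3: "inner (dn n, G (dn n)) (v, G v) = inner (dn n) v + inner (G (dn n)) (G v)" by simp
    show ?thesis using i1 i2 i3 by linarith
  qed
  have l1: "(\<lambda>n. inner (ut n - uL) v) \<longlonglongrightarrow> inner 0 v" using ut_conv by (intro tendsto_intros)
  have l2: "(\<lambda>n. inner (xn n) (G v)) \<longlonglongrightarrow> inner (G uL) (G v)" by (rule xn_weak)
  have "(\<lambda>n. (dn n, G (dn n))) \<longlonglongrightarrow> 0" using gn_conv by (simp add: tendsto_norm_zero_iff)
  hence l3: "(\<lambda>n. inner (dn n, G (dn n)) (v, G v)) \<longlonglongrightarrow> inner 0 (v, G v)" by (intro tendsto_intros)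
  have "(\<lambda>n. inner uL v + inner (ut n - uL) v + inner (xn n) (G v) + inner (dn n, G (dn n)) (v, G v))
      \<longlonglongrightarrow> inner uL v + inner 0 v + inner (G uL) (G v) + inner 0 (v, G v)"
    by (intro tendsto_add tendsto_const l1 l2 l3)
  thus ?thesis unfolding dec by simp
qed

end


context mainctx
begin

lemma gi_eq:
  assumes v: "v \<in> BD_G J0 J1 dG G dD D" and x: "x \<in> dG" and y: "y \<in> dG" and c: "x - y \<in> Gc"
  shows "graph_inner J0 J1 G y v = graph_inner J0 J1 G x v"
proof -
  have "graph_inner J0 J1 G (x - y) v = 0" by (rule BD_G_orth[OF v c])
  thus ?thesis using G.graph_inner_diff_left[OF x y, of v] by simp
qed

lemma gi_conv:
  assumes v: "v \<in> dG"
  shows "(\<lambda>n. graph_inner J0 J1 G (un n) v) \<longlonglongrightarrow> graph_inner J0 J1 G uL v"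
proof -
  have Jv: "J0 v \<in> dG" using G.dm_J[OF v] .
  have e: "graph_inner J0 J1 G x v = Complex (inner x v + inner (G x) (G v)) (inner x (J0 v) + inner (G x) (G (J0 v)))" for x
    using G.graph_inner_Re[of x v] G.graph_inner_Im[OF v, of x] G.graph_inner_Re[of x "J0 v"]
    by (simp add: complex_eq_iff)
  show ?thesis unfolding e by (intro tendsto_Complex real_weak v Jv)
qed

lemma final:
  "\<forall>v \<in> BD_G J0 J1 dG G dD D.
     (\<lambda>n. graph_inner J0 J1 G (DtN_inv J0 J1 dG G dD D (aa n) (mm n) (qq n)) v)
       \<longlonglongrightarrow> graph_inner J0 J1 G (DtN_inv J0 J1 dG G dD D a m q) v"
proof
  fix v assume v: "v \<in> BD_G J0 J1 dG G dD D"
  have vG: "v \<in> dG" using v BD_G_sub by blast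
  have cL: "DtN_inv J0 J1 dG G dD D a m q \<in> BD_G J0 J1 dG G dD D \<and> uL - DtN_inv J0 J1 dG G dD D a m q \<in> Gc"
    by (rule coefs.DtN_inv_char[OF Cl q_BD uL_sol])
  have cn: "DtN_inv J0 J1 dG G dD D (aa n) (mm n) (qq n) \<in> BD_G J0 J1 dG G dD D \<and>
      un n - DtN_inv J0 J1 dG G dD D (aa n) (mm n) (qq n) \<in> Gc" for n
    using coefs.DtN_inv_char[OF Cn _ un_sol] qq_BD by blast
  have eL: "graph_inner J0 J1 G (DtN_inv J0 J1 dG G dD D a m q) v = graph_inner J0 J1 G uL v"
    using gi_eq[OF v uL_dG _ ] cL BD_G_sub by blast
  have en: "graph_inner J0 J1 G (DtN_inv J0 J1 dG G dD D (aa n) (mm n) (qq n)) v = graph_inner J0 J1 G (un n) v" for n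
    using gi_eq[OF v un_dG _ ] cn BD_G_sub by blast
  show "(\<lambda>n. graph_inner J0 J1 G (DtN_inv J0 J1 dG G dD D (aa n) (mm n) (qq n)) v)
       \<longlonglongrightarrow> graph_inner J0 J1 G (DtN_inv J0 J1 dG G dD D a m q) v"
    unfolding eL en by (rule gi_conv[OF vG])
qed

end

theorem proposition4p6:
  fixes J0 :: "'a::{real_inner,complete_space} \<Rightarrow> 'a"
    and J1 :: "'b::{real_inner,complete_space} \<Rightarrow> 'b"
    and dG :: "'a set" and G :: "'a \<Rightarrow> 'b"
    and dD :: "'b set" and D :: "'b \<Rightarrow> 'a"
    and mm :: "nat \<Rightarrow> 'a \<Rightarrow> 'a" and m :: "'a \<Rightarrow> 'a"
    and aa :: "nat \<Rightarrow> 'b \<Rightarrow> 'b" and a :: "'b \<Rightarrow> 'b"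
    and \<mu> :: real
    and qq :: "nat \<Rightarrow> 'b" and q :: 'b
  assumes J0: "complex_structure J0" and J1: "complex_structure J1"
    and G: "densely_defined_closed J0 J1 dG G"
    and D: "densely_defined_closed J1 J0 dD D"
    and GD: "\<forall>y \<in> dom_Dcirc J0 J1 dG G.
               y \<in> dD \<and> D y = - adj (cinner J0) (cinner J1) dG G y"
    and compact_emb: "\<forall>S \<subseteq> dG. bounded ((\<lambda>x. (x, G x)) ` S) \<longrightarrow> compact (closure S)"
    and mm_L: "\<forall>n. bounded_clinear_op J0 (mm n)" and m_L: "bounded_clinear_op J0 m"
    and aa_L: "\<forall>n. bounded_clinear_op J1 (aa n)" and a_L: "bounded_clinear_op J1 a"
    and mu_pos: "\<mu> > 0"
    and mm_coerc: "\<forall>n. re_ge J0 (mm n) \<mu>" and m_coerc: "re_ge J0 m \<mu>"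
    and aa_coerc: "\<forall>n. re_ge J1 (aa n) \<mu>" and a_coerc: "re_ge J1 a \<mu>"
    and aa_bdd: "bdd_above (range (\<lambda>n. onorm (aa n)))"
    and m_wot: "\<forall>x y. (\<lambda>n. cinner J0 (mm n x) y) \<longlonglongrightarrow> cinner J0 (m x) y"
    and a_wot: "\<forall>x \<in> G ` dG. \<forall>y \<in> G ` dG.
                  (\<lambda>n. cinner J1 (compress_inv J1 (G ` dG) (aa n) x) y)
                    \<longlonglongrightarrow> cinner J1 (compress_inv J1 (G ` dG) a x) y"
    and qq_BD: "\<forall>n. qq n \<in> BD_D J0 J1 dG G dD D" and q_BD: "q \<in> BD_D J0 J1 dG G dD D"
    and qq_lim: "(\<lambda>n. (qq n, D (qq n))) \<longlonglongrightarrow> (q, D q)"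
  shows "\<forall>v \<in> BD_G J0 J1 dG G dD D.
           (\<lambda>n. graph_inner J0 J1 G (DtN_inv J0 J1 dG G dD D (aa n) (mm n) (qq n)) v)
             \<longlonglongrightarrow> graph_inner J0 J1 G (DtN_inv J0 J1 dG G dD D a m q) v"
proof -
  have cG: "clinear_op J0 J1 dG G" using G by (simp add: densely_defined_closed_def)
  have cD: "clinear_op J1 J0 dD D" using D by (simp add: densely_defined_closed_def)
  have dG': "dcop J0 J1 dG G"
    by (intro dcop.intro cop.intro cstr.intro dcop_axioms.intro cop_axioms.intro J0 J1 G cG)
  have dD': "dcop J1 J0 dD D"
    by (intro dcop.intro cop.intro cstr.intro dcop_axioms.intro cop_axioms.intro J0 J1 D cD)
  have S: "setting J0 J1 dG G dD D"
    by (intro setting.intro setting_axioms.intro dG' dD' GD compact_emb)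
  interpret mainctx J0 J1 dG G dD D mm m aa a \<mu> qq q
    by (intro mainctx.intro mainctx_axioms.intro S) (fact+)
  show ?thesis by (rule final)
qed


end
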